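(* There is a universal constant $C>0$ such that for every unit-weight graph $G$ on $n$ vertices there exists a binary signaling scheme that is persuasive and has cost at most $C\sqrt{n}\cdot\mathsf{OPT}$. Moreover, the $O(\sqrt{n})$ approximation ratio is tight for certain graphs: there is a universal constant $c>0$ and a family of unit-weight graphs with arbitrarily large number $n$ of vertices on which $\mathsf{OPT}=O(1)$ and every persuasive signaling scheme (with any finite signal space) has cost at least $c\sqrt{n}$.
   Context: Setting. $V$ is a finite set of $n$ task types and $W=(W_{u,v})_{u,v\in V}$ is a symmetric matrix with entries in $[0,1]$ and $W_{v,v}=1$ for all $v$. It is represented by the weighted graph $G=(V,E,w)$ with $E=\{\{u,v\}:u\neq v,\ W_{u,v}>0\}$ and $w(\{u,v\})=W_{u,v}$; $G$ is a unit-weight graph if all entries of $W$ lie in $\{0,1\}$. For $\theta\in\mathbb{R}_{\ge0}^V$ let $u_v(\theta)=\sum_{v'\in V}W_{v,v'}\theta_{v'}$. A vector $\theta\in\mathbb{R}_{\ge0}^V$ is feasible if $W\theta\ge\mathbf 1$ coordinatewise. $\mathsf{OPT}=\min\{\|\theta\|_1:\theta\ge 0 \text{ feasible}\}$. Signaling. There are $n$ agents; the type profile $t=(t_1,\dots,t_n)$ is a uniformly random bijection $[n]\to V$. A signaling scheme with finite signal space $\Sigma\subset[0,1]$ is a map $\varphi$ assigning to each bijection $t$ a distribution $\varphi(t)$ on $\Sigma^V$; given $t$, a vector $s=(s_v)_{v\in V}\sim\varphi(t)$ is drawn and agent $i$ privately receives $s_{t_i}$. For agent $i$, a signal $\theta\in\Sigma$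 with $\Pr[s_{t_i}=\theta]>0$ and $x\ge0$, let $Q_i(x\mid\theta)=\mathbb{E}\big[x+\sum_{v'\neq t_i}W_{t_i,v'}s_{v'}\,\big|\,s_{t_i}=\theta\big]$ (expectation over the joint law of $t$ and $s$). The scheme is persuasive if for every agent $i$ and every such $\theta$: $Q_i(\theta\mid\theta)\ge1$ and $\theta=\min\{x\ge0:Q_i(x\mid\theta)\ge1\}$. Its cost is $\mathbb{E}[\|s\|_1]$. A binary signaling scheme is one with $|\Sigma|=2$. *)

theory Defs
  imports "HOL-Probability.Probability" "HOL-Combinatorics.Permutations"
begin

text \<open>Vertex set (task types) V = {..<n}; agents = {..<n}.
  Type profiles are bijections {..<n} -> {..<n}, represented as permutations.
  A signal vector s in Sigma^V is a function nat => real (only values on {..<n} matter).\<close>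

definition unit_weight_graph :: "nat \<Rightarrow> (nat \<Rightarrow> nat \<Rightarrow> real) \<Rightarrow> bool" where
  "unit_weight_graph n W \<longleftrightarrow>
     (\<forall>u<n. \<forall>v<n. W u v \<in> {0, 1} \<and> W u v = W v u) \<and> (\<forall>v<n. W v v = 1)"

definition feasible :: "nat \<Rightarrow> (nat \<Rightarrow> nat \<Rightarrow> real) \<Rightarrow> (nat \<Rightarrow> real) \<Rightarrow> bool" where
  "feasible n W \<theta> \<longleftrightarrow> (\<forall>v<n. 0 \<le> \<theta> v) \<and> (\<forall>v<n. (\<Sum>v'<n. W v v' * \<theta> v') \<ge> 1)"

definition OPT :: "nat \<Rightarrow> (nat \<Rightarrow> nat \<Rightarrow> real) \<Rightarrow> real" where
  "OPT n W = Inf {(\<Sum>v<n. \<theta> v) | \<theta>. feasible n W \<theta>}"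

definition type_profiles :: "nat \<Rightarrow> (nat \<Rightarrow> nat) set" where
  "type_profiles n = {t. t permutes {..<n}}"

definition joint :: "nat \<Rightarrow> ((nat \<Rightarrow> nat) \<Rightarrow> (nat \<Rightarrow> real) pmf) \<Rightarrow> ((nat \<Rightarrow> nat) \<times> (nat \<Rightarrow> real)) pmf" where
  "joint n \<phi> = bind_pmf (pmf_of_set (type_profiles n)) (\<lambda>t. map_pmf (\<lambda>s. (t, s)) (\<phi> t))"

definition is_scheme :: "nat \<Rightarrow> real set \<Rightarrow> ((nat \<Rightarrow> nat) \<Rightarrow> (nat \<Rightarrow> real) pmf) \<Rightarrow> bool" where
  "is_scheme n \<Sigma> \<phi> \<longleftrightarrow> finite \<Sigma> \<and> \<Sigma> \<subseteq> {0..1} \<and>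
     (\<forall>t\<in>type_profiles n. \<forall>s\<in>set_pmf (\<phi> t). \<forall>v<n. s v \<in> \<Sigma>)"

definition cond_exp :: "'a pmf \<Rightarrow> 'a set \<Rightarrow> ('a \<Rightarrow> real) \<Rightarrow> real" where
  "cond_exp D A X = measure_pmf.expectation D (\<lambda>\<omega>. indicator A \<omega> * X \<omega>) / measure_pmf.prob D A"

definition signal_event :: "nat \<Rightarrow> real \<Rightarrow> ((nat \<Rightarrow> nat) \<times> (nat \<Rightarrow> real)) set" where
  "signal_event i \<theta> = {(t, s). s (t i) = \<theta>}"

definition Q :: "nat \<Rightarrow> (nat \<Rightarrow> nat \<Rightarrow> real) \<Rightarrow> ((nat \<Rightarrow> nat) \<Rightarrow> (nat \<Rightarrow> real) pmf)
                  \<Rightarrow> nat \<Rightarrow> real \<Rightarrow> real \<Rightarrow> real" where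
  "Q n W \<phi> i x \<theta> = cond_exp (joint n \<phi>) (signal_event i \<theta>)
      (\<lambda>(t, s). x + (\<Sum>v'\<in>{..<n} - {t i}. W (t i) v' * s v'))"

definition persuasive :: "nat \<Rightarrow> (nat \<Rightarrow> nat \<Rightarrow> real) \<Rightarrow> ((nat \<Rightarrow> nat) \<Rightarrow> (nat \<Rightarrow> real) pmf) \<Rightarrow> bool" where
  "persuasive n W \<phi> \<longleftrightarrow>
     (\<forall>i<n. \<forall>\<theta>. measure_pmf.prob (joint n \<phi>) (signal_event i \<theta>) > 0 \<longrightarrow>
        Q n W \<phi> i \<theta> \<theta> \<ge> 1 \<and> \<theta> = (LEAST x. 0 \<le> x \<and> Q n W \<phi> i x \<theta> \<ge> 1))"

definition cost :: "nat \<Rightarrow> ((nat \<Rightarrow> nat) \<Rightarrow> (nat \<Rightarrow> real) pmf) \<Rightarrow> real" where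
  "cost n \<phi> = measure_pmf.expectation (joint n \<phi>) (\<lambda>(t, s). \<Sum>v<n. \<bar>s v\<bar>)"

end

theory Submission
  imports Defs
begin


lemma tp_finite: "finite (type_profiles n)"
  unfolding type_profiles_def by (rule finite_permutations) simp

lemma tp_nonempty: "id \<in> type_profiles n"
  unfolding type_profiles_def by simp

lemma tp_range: "t \<in> type_profiles n \<Longrightarrow> i < n \<Longrightarrow> t i < n"
  unfolding type_profiles_def using permutes_in_image by fastforce

lemma tp_sum_reindex:
  assumes "t \<in> type_profiles n"
  shows "(\<Sum>i<n. g (t i)) = (\<Sum>v<n. (g v :: real))"
proof -
  have "bij_betw t {..<n} {..<n}" using assms unfolding type_profiles_def
    by (auto intro: permutes_imp_bij)
  thus ?thesis by (rule sum.reindex_bij_betw)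
qed

lemma tp_card_eq:
  assumes "v < n" "w < n" "i < n"
  shows "card {t\<in>type_profiles n. t i = v} = card {t\<in>type_profiles n. t i = w}"
proof -
  let ?f = "\<lambda>t. Transposition.transpose v w \<circ> t"
  have "bij_betw ?f {t\<in>type_profiles n. t i = v} {t\<in>type_profiles n. t i = w}"
  proof (rule bij_betw_byWitness[where f' = ?f])
    show "\<forall>a\<in>{t \<in> type_profiles n. t i = v}. ?f (?f a) = a"
      by (auto simp: fun_eq_iff Transposition.transpose_def)
    show "\<forall>a\<in>{t \<in> type_profiles n. t i = w}. ?f (?f a) = a"
      by (auto simp: fun_eq_iff Transposition.transpose_def)
    show "?f ` {t \<in> type_profiles n. t i = v} \<subseteq> {t \<in> type_profiles n. t i = w}"
      using assms by (auto simp: type_profiles_def Transposition.transpose_def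
          intro!: permutes_compose permutes_swap_id)
    show "?f ` {t \<in> type_profiles n. t i = w} \<subseteq> {t \<in> type_profiles n. t i = v}"
      using assms by (auto simp: type_profiles_def Transposition.transpose_def
          intro!: permutes_compose permutes_swap_id)
  qed
  thus ?thesis by (rule bij_betw_same_card)
qed

lemma tp_uniform:
  assumes "i < n"
  shows "(\<Sum>t\<in>type_profiles n. g (t i)) = real (card (type_profiles n)) / n * (\<Sum>v<n. (g v :: real))"
proof -
  let ?T = "type_profiles n"
  define c where "c = card {t\<in>?T. t i = i}"
  have cv: "card {t\<in>?T. t i = v} = c" if "v < n" for v
    unfolding c_def using tp_card_eq[OF that assms assms] .
  have 1: "(\<Sum>t\<in>?T. h (t i)) = real c * (\<Sum>v<n. h v)" for h :: "nat \<Rightarrow> real"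
  proof -
    have "(\<Sum>t\<in>?T. h (t i)) = (\<Sum>v<n. \<Sum>t\<in>{t\<in>?T. t i = v}. h (t i))"
      using tp_finite[of n] tp_range[OF _ assms]
      by (intro sum.group[symmetric]) auto
    also have "\<dots> = (\<Sum>v<n. real c * h v)"
      using cv by (intro sum.cong refl) simp
    finally show ?thesis by (simp add: sum_distrib_left)
  qed
  have "(\<Sum>t\<in>?T. (1::real)) = real c * (\<Sum>v<n. 1)"
    using 1[of "\<lambda>_. 1"] by simp
  hence "real (card ?T) = real c * n" by simp
  with 1[of g] assms show ?thesis by simp
qed



lemma joint_const_expect:
  fixes H :: "nat \<Rightarrow> (nat \<Rightarrow> real) \<Rightarrow> real"
  assumes "i < n" "finite (set_pmf D)"
  shows "measure_pmf.expectation (joint n (\<lambda>_. D)) (\<lambda>ts. H (fst ts i) (snd ts))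
         = measure_pmf.expectation D (\<lambda>s. \<Sum>v<n. H v s) / n"
proof -
  let ?T = "type_profiles n"
  have cT: "card ?T > 0" using tp_finite tp_nonempty card_gt_0_iff by blast
  have "measure_pmf.expectation (joint n (\<lambda>_. D)) (\<lambda>ts. H (fst ts i) (snd ts))
     = (\<Sum>t\<in>?T. measure_pmf.expectation (map_pmf (\<lambda>s. (t,s)) D) (\<lambda>ts. H (fst ts i) (snd ts)) /\<^sub>R real (card ?T))"
    unfolding joint_def using tp_finite tp_nonempty assms(2)
    by (intro pmf_expectation_bind_pmf_of_set) auto
  also have "\<dots> = (\<Sum>t\<in>?T. measure_pmf.expectation D (H (t i))) / card ?T"
    by (simp add: sum_divide_distrib divide_inverse_commute sum_distrib_left)
  also have "(\<Sum>t\<in>?T. measure_pmf.expectation D (H (t i))) = measure_pmf.expectation D (\<lambda>s. \<Sum>t\<in>?T. H (t i) s)"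
    by (subst Bochner_Integration.integral_sum) (auto intro: integrable_measure_pmf_finite assms)
  also have "(\<lambda>s. \<Sum>t\<in>?T. H (t i) s) = (\<lambda>s. card ?T / n * (\<Sum>v<n. H v s))"
    using tp_uniform[OF assms(1)] by (intro ext) simp
  also have "measure_pmf.expectation D (\<lambda>s. card ?T / n * (\<Sum>v<n. H v s)) = card ?T / n * measure_pmf.expectation D (\<lambda>s. (\<Sum>v<n. H v s))"
    by simp
  finally show ?thesis using cT by simp
qed

lemma joint_const_expect_snd:
  fixes G :: "(nat \<Rightarrow> real) \<Rightarrow> real"
  assumes "finite (set_pmf D)"
  shows "measure_pmf.expectation (joint n (\<lambda>_. D)) (\<lambda>ts. G (snd ts)) = measure_pmf.expectation D G"
proof -
  let ?T = "type_profiles n"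
  have cT: "card ?T > 0" using tp_finite tp_nonempty card_gt_0_iff by blast
  have "measure_pmf.expectation (joint n (\<lambda>_. D)) (\<lambda>ts. G (snd ts))
     = (\<Sum>t\<in>?T. measure_pmf.expectation (map_pmf (\<lambda>s. (t,s)) D) (\<lambda>ts. G (snd ts)) /\<^sub>R real (card ?T))"
    unfolding joint_def using tp_finite tp_nonempty assms
    by (intro pmf_expectation_bind_pmf_of_set[where h = "\<lambda>ts. G (snd ts)"]) auto
  also have "\<dots> = measure_pmf.expectation D G" using cT by simp
  finally show ?thesis .
qed

lemma least_shift:
  fixes c :: real
  shows "(LEAST x. 0 \<le> x \<and> 1 \<le> x + c) = max 0 (1 - c)"
  by (rule Least_equality) auto

definition sig :: "real \<Rightarrow> (nat \<Rightarrow> bool) \<Rightarrow> nat \<Rightarrow> real" where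
  "sig a f = (\<lambda>v. if f v then a else 0)"

definition Xf :: "nat \<Rightarrow> (nat \<Rightarrow> bool) \<Rightarrow> real" where
  "Xf n f = (\<Sum>v<n. of_bool (f v))"
definition Ff :: "nat \<Rightarrow> (nat \<Rightarrow> nat \<Rightarrow> real) \<Rightarrow> (nat \<Rightarrow> bool) \<Rightarrow> real" where
  "Ff n W f = (\<Sum>v<n. \<Sum>v'<n. W v v' * of_bool (f v'))"
definition Ef :: "nat \<Rightarrow> (nat \<Rightarrow> nat \<Rightarrow> real) \<Rightarrow> (nat \<Rightarrow> bool) \<Rightarrow> real" where
  "Ef n W f = (\<Sum>v<n. \<Sum>v'\<in>{..<n}-{v}. W v v' * of_bool (f v) * of_bool (f v'))"
definition Cf :: "nat \<Rightarrow> (nat \<Rightarrow> nat \<Rightarrow> real) \<Rightarrow> (nat \<Rightarrow> bool) \<Rightarrow> real" where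
  "Cf n W f = (\<Sum>v<n. \<Sum>v'\<in>{..<n}-{v}. W v v' * (1 - of_bool (f v)) * of_bool (f v'))"

lemma Ff_split:
  assumes "\<forall>v<n. W v v = 1"
  shows "Ff n W f = Xf n f + Ef n W f + Cf n W f"
proof -
  have "(\<Sum>v'<n. W v v' * of_bool (f v')) = of_bool (f v) + (\<Sum>v'\<in>{..<n}-{v}. W v v' * of_bool (f v) * of_bool (f v'))
          + (\<Sum>v'\<in>{..<n}-{v}. W v v' * (1 - of_bool (f v)) * of_bool (f v'))" if "v < n" for v
  proof -
    have "(\<Sum>v'<n. W v v' * of_bool (f v')) = W v v * of_bool (f v) + (\<Sum>v'\<in>{..<n}-{v}. W v v' * of_bool (f v'))"
      using that by (subst sum.remove[of _ v]) auto
    also have "(\<Sum>v'\<in>{..<n}-{v}. W v v' * of_bool (f v')) = (\<Sum>v'\<in>{..<n}-{v}. W v v' * of_bool (f v) * of_bool (f v'))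
          + (\<Sum>v'\<in>{..<n}-{v}. W v v' * (1 - of_bool (f v)) * of_bool (f v'))"
      by (subst sum.distrib[symmetric]) (intro sum.cong, auto simp: algebra_simps)
    finally show ?thesis using assms that by simp
  qed
  thus ?thesis unfolding Ff_def Xf_def Ef_def Cf_def
    by (simp add: sum.distrib)
qed



lemma prob_const:
  assumes "i < n" "finite (set_pmf D)"
  shows "measure_pmf.prob (joint n (\<lambda>_. D)) (signal_event i \<theta>)
       = measure_pmf.expectation D (\<lambda>s. \<Sum>v<n. of_bool (s v = \<theta>)) / n"
proof -
  have "measure_pmf.prob (joint n (\<lambda>_. D)) (signal_event i \<theta>)
      = measure_pmf.expectation (joint n (\<lambda>_. D)) (indicator (signal_event i \<theta>))"
    by simp
  also have "indicator (signal_event i \<theta>) = (\<lambda>ts. (\<lambda>v s. of_bool (s v = \<theta>) :: real) (fst ts i) (snd ts))"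
    by (auto simp: fun_eq_iff signal_event_def indicator_def)
  also have "measure_pmf.expectation (joint n (\<lambda>_. D)) \<dots> = measure_pmf.expectation D (\<lambda>s. \<Sum>v<n. of_bool (s v = \<theta>)) / n"
    by (rule joint_const_expect[OF assms])
  finally show ?thesis .
qed

lemma Q_const:
  assumes "i < n" "finite (set_pmf D)"
  shows "Q n W (\<lambda>_. D) i x \<theta> =
     measure_pmf.expectation D (\<lambda>s. \<Sum>v<n. of_bool (s v = \<theta>) * (x + (\<Sum>v'\<in>{..<n}-{v}. W v v' * s v')))
     / measure_pmf.expectation D (\<lambda>s. \<Sum>v<n. of_bool (s v = \<theta>))"
proof -
  have "measure_pmf.expectation (joint n (\<lambda>_. D)) (\<lambda>\<omega>. indicator (signal_event i \<theta>) \<omega> *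
          (case \<omega> of (t, s) \<Rightarrow> x + (\<Sum>v'\<in>{..<n} - {t i}. W (t i) v' * s v')))
      = measure_pmf.expectation (joint n (\<lambda>_. D)) (\<lambda>ts. (\<lambda>v s. of_bool (s v = \<theta>) * (x + (\<Sum>v'\<in>{..<n}-{v}. W v v' * s v'))) (fst ts i) (snd ts))"
    by (rule arg_cong[where f = "measure_pmf.expectation _"]) (auto simp: fun_eq_iff signal_event_def indicator_def)
  also have "\<dots> = measure_pmf.expectation D (\<lambda>s. \<Sum>v<n. of_bool (s v = \<theta>) * (x + (\<Sum>v'\<in>{..<n}-{v}. W v v' * s v'))) / n"
    by (rule joint_const_expect[OF assms])
  finally have "Q n W (\<lambda>_. D) i x \<theta> =
     (measure_pmf.expectation D (\<lambda>s. \<Sum>v<n. of_bool (s v = \<theta>) * (x + (\<Sum>v'\<in>{..<n}-{v}. W v v' * s v'))) / n)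
     / (measure_pmf.expectation D (\<lambda>s. \<Sum>v<n. of_bool (s v = \<theta>)) / n)"
    unfolding Q_def cond_exp_def prob_const[OF assms] by simp
  thus ?thesis using assms(1) by simp
qed

lemma sig_eq_a: "a \<noteq> 0 \<Longrightarrow> (sig a f v = a) = f v"
  by (auto simp: sig_def)
lemma sig_eq_0: "a \<noteq> 0 \<Longrightarrow> (sig a f v = 0) = (\<not> f v)"
  by (auto simp: sig_def)

lemma sig_Y: "(\<Sum>v'\<in>A. W v v' * sig a f v') = a * (\<Sum>v'\<in>A. W v v' * of_bool (f v'))"
  by (auto simp: sig_def sum_distrib_left intro!: sum.cong)

lemma scheme_from_sets:
  fixes M :: "(nat \<Rightarrow> bool) pmf"
  assumes W: "unit_weight_graph n W" and fin: "finite (set_pmf M)"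
    and Xpos: "measure_pmf.expectation M (Xf n) > 0"
    and cond: "measure_pmf.expectation M (Xf n) * (measure_pmf.expectation M (Ff n W) - n)
               \<ge> n * measure_pmf.expectation M (Ef n W)"
  shows "\<exists>\<Sigma> \<phi>. is_scheme n \<Sigma> \<phi> \<and> card \<Sigma> = 2 \<and> persuasive n W \<phi> \<and>
            cost n \<phi> \<le> measure_pmf.expectation M (Xf n)"
proof -
  define X where "X = measure_pmf.expectation M (Xf n)"
  define F where "F = measure_pmf.expectation M (Ff n W)"
  define Ey where "Ey = measure_pmf.expectation M (Ef n W)"
  define Cy where "Cy = measure_pmf.expectation M (Cf n W)"
  have intM: "integrable (measure_pmf M) g" for g :: "(nat \<Rightarrow> bool) \<Rightarrow> real"
    by (rule integrable_measure_pmf_finite[OF fin])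
  have Wnn: "0 \<le> W v v'" if "v < n" "v' < n" for v v'
  proof -
    have "W v v' \<in> {0,1}" using W that unfolding unit_weight_graph_def by blast
    thus ?thesis by auto
  qed
  have Wd: "\<forall>v<n. W v v = 1" using W unfolding unit_weight_graph_def by blast
  have Ey_nn: "Ey \<ge> 0" unfolding Ey_def Ef_def
    by (intro Bochner_Integration.integral_nonneg sum_nonneg) (auto intro!: mult_nonneg_nonneg Wnn)
  have X_le: "X \<le> n"
  proof -
    have "Xf n f \<le> n" for f
    proof -
      have "Xf n f \<le> (\<Sum>v<n. (1::real))" unfolding Xf_def by (intro sum_mono) auto
      thus ?thesis by simp
    qed
    hence "X \<le> measure_pmf.expectation M (\<lambda>_. real n)" unfolding X_def
      by (intro integral_mono intM) auto
    thus ?thesis by simp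
  qed
  have "Ff n W = (\<lambda>f. Xf n f + Ef n W f + Cf n W f)"
    using Ff_split[where n=n and W=W, OF Wd] by (intro ext) simp
  hence XFC: "F = X + Ey + Cy" unfolding F_def X_def Ey_def Cy_def
    by (simp add: intM)
  have Xp: "X > 0" using Xpos X_def by simp
  have npos: "n > 0" using Xp X_le by simp
  define a where "a = X / (X + Ey)"
  have a_pos: "a > 0" and a_le: "a \<le> 1" using Xp Ey_nn unfolding a_def by auto
  have a_ne: "a \<noteq> 0" using a_pos by simp
  have one_minus_a: "a * Ey / X = 1 - a"
  proof -
    have h1: "X + Ey \<noteq> 0" "X \<noteq> 0" using Xp Ey_nn by auto
    have "a * Ey / X = Ey / (X + Ey)" unfolding a_def using h1 by auto
    moreover have "1 - a = Ey / (X + Ey)" unfolding a_def using h1 by (simp add: field_simps)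
    ultimately show ?thesis by simp
  qed
  have cond0: "a * Cy \<ge> n - X"
  proof -
    have "X * Cy \<ge> (n - X) * (X + Ey)" using cond XFC unfolding X_def[symmetric] F_def[symmetric] Ey_def[symmetric]
      by (simp add: algebra_simps)
    thus ?thesis unfolding a_def using Xp Ey_nn by (simp add: field_simps)
  qed
  define D where "D = map_pmf (sig a) M"
  have finD: "finite (set_pmf D)" unfolding D_def using fin by simp
  have ED: "measure_pmf.expectation D g = measure_pmf.expectation M (\<lambda>f. g (sig a f))" for g :: "(nat \<Rightarrow> real) \<Rightarrow> real"
    unfolding D_def by simp
  define \<phi> where "\<phi> = (\<lambda>_ :: nat \<Rightarrow> nat. D)"
  have scheme: "is_scheme n {0, a} \<phi>"
    unfolding is_scheme_def \<phi>_def D_def using a_pos a_le by (auto simp: sig_def)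
  have card2: "card {0, a} = 2" using a_ne by simp
  have cnt_a: "(\<Sum>v<n. of_bool (sig a f v = a)) = Xf n f" for f :: "nat \<Rightarrow> bool"
    unfolding Xf_def using a_ne by (simp add: sig_eq_a)
  have num_a: "(\<Sum>v<n. of_bool (sig a f v = a) * (x + (\<Sum>v'\<in>{..<n}-{v}. W v v' * sig a f v')))
       = x * Xf n f + a * Ef n W f" for f x
    unfolding Xf_def Ef_def using a_ne
    by (simp add: sig_eq_a sig_Y sum_distrib_left sum.distrib algebra_simps of_bool_def)
  have cnt_0: "(\<Sum>v<n. of_bool (sig a f v = 0)) = n - Xf n f" for f :: "nat \<Rightarrow> bool"
  proof -
    have "(\<Sum>v<n. of_bool (sig a f v = 0)) = (\<Sum>v<n. 1 - (of_bool (f v) :: real))"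
      using a_ne by (intro sum.cong) (auto simp: sig_eq_0)
    thus ?thesis unfolding Xf_def by (simp add: sum_subtractf)
  qed
  have num_0: "(\<Sum>v<n. of_bool (sig a f v = 0) * (x + (\<Sum>v'\<in>{..<n}-{v}. W v v' * sig a f v')))
       = x * (n - Xf n f) + a * Cf n W f" for f x
  proof -
    have "(\<Sum>v<n. of_bool (sig a f v = 0) * (x + (\<Sum>v'\<in>{..<n}-{v}. W v v' * sig a f v')))
        = (\<Sum>v<n. x * (1 - of_bool (f v)) + a * (\<Sum>v'\<in>{..<n}-{v}. W v v' * (1 - of_bool (f v)) * of_bool (f v')))"
      using a_ne by (intro sum.cong refl) (auto simp: sig_eq_0 sig_Y)
    thus ?thesis unfolding Xf_def Cf_def
      by (simp add: sum.distrib sum_distrib_left sum_subtractf algebra_simps)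
  qed
  have pers: "persuasive n W \<phi>"
    unfolding persuasive_def
  proof (intro allI impI)
    fix i \<theta> assume i: "i < n" and P: "measure_pmf.prob (joint n \<phi>) (signal_event i \<theta>) > 0"
    have Pv: "measure_pmf.prob (joint n \<phi>) (signal_event i \<theta>)
       = measure_pmf.expectation M (\<lambda>f. \<Sum>v<n. of_bool (sig a f v = \<theta>)) / n"
      unfolding \<phi>_def prob_const[OF i finD] ED ..
    have Qv: "Q n W \<phi> i x \<theta> = measure_pmf.expectation M (\<lambda>f. \<Sum>v<n. of_bool (sig a f v = \<theta>) * (x + (\<Sum>v'\<in>{..<n}-{v}. W v v' * sig a f v')))
     / measure_pmf.expectation M (\<lambda>f. \<Sum>v<n. of_bool (sig a f v = \<theta>))" for x
      unfolding \<phi>_def Q_const[OF i finD] ED ..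
    consider "\<theta> = a" | "\<theta> = 0" | "\<theta> \<noteq> a" "\<theta> \<noteq> 0" by blast
    thus "1 \<le> Q n W \<phi> i \<theta> \<theta> \<and> \<theta> = (LEAST x. 0 \<le> x \<and> 1 \<le> Q n W \<phi> i x \<theta>)"
    proof cases
      case 1
      have eq: "Q n W \<phi> i x \<theta> = x + (1 - a)" for x
      proof -
        have "Q n W \<phi> i x \<theta> = (x * X + a * Ey) / X"
          unfolding Qv unfolding 1 num_a cnt_a X_def Ey_def by (simp add: intM)
        also have "\<dots> = x + a * Ey / X" using Xp by (simp add: field_simps)
        finally show ?thesis using one_minus_a by simp
      qed
      have "(LEAST x. 0 \<le> x \<and> 1 \<le> Q n W \<phi> i x \<theta>) = max 0 (1 - (1 - a))"
        unfolding eq by (rule least_shift)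
      thus ?thesis using 1 a_pos eq by simp
    next
      case 2
      have "0 < (real n - X) / n" using P unfolding Pv unfolding 2 cnt_0 X_def
        by (simp add: intM)
      hence nX: "n - X > 0" using npos by (simp add: zero_less_divide_iff)
      have eq: "Q n W \<phi> i x \<theta> = x + a * Cy / (n - X)" for x
      proof -
        have "Q n W \<phi> i x \<theta> = (x * (n - X) + a * Cy) / (n - X)"
          unfolding Qv unfolding 2 num_0 cnt_0 X_def Cy_def by (simp add: intM)
        also have "\<dots> = x + a * Cy / (n - X)" using nX by (simp add: field_simps)
        finally show ?thesis .
      qed
      have c1: "a * Cy / (n - X) \<ge> 1" using cond0 nX by simp
      have "(LEAST x. 0 \<le> x \<and> 1 \<le> Q n W \<phi> i x \<theta>) = max 0 (1 - a * Cy / (n - X))"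
        unfolding eq by (rule least_shift)
      thus ?thesis using 2 c1 eq by simp
    next
      case 3
      have "(\<lambda>f. \<Sum>v<n. of_bool (sig a f v = \<theta>) :: real) = (\<lambda>_. 0)"
        using 3 by (auto simp: sig_def fun_eq_iff intro!: sum.neutral)
      hence False using P unfolding Pv by simp
      thus ?thesis ..
    qed
  qed
  have "cost n \<phi> = measure_pmf.expectation D (\<lambda>s. \<Sum>v<n. \<bar>s v\<bar>)"
    unfolding cost_def \<phi>_def case_prod_unfold by (rule joint_const_expect_snd[OF finD])
  also have "\<dots> = measure_pmf.expectation M (\<lambda>f. a * Xf n f)"
    unfolding ED Xf_def using a_pos by (simp add: sig_def sum_distrib_left of_bool_def if_distrib cong: if_cong)
  also have "\<dots> = a * X" unfolding X_def by simp
  also have "\<dots> \<le> X" using a_le Xp by simp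
  finally show ?thesis using scheme card2 pers X_def by blast
qed



lemma uw_W01: "unit_weight_graph n W \<Longrightarrow> u < n \<Longrightarrow> v < n \<Longrightarrow> W u v = 0 \<or> W u v = 1"
  unfolding unit_weight_graph_def by blast
lemma uw_nn: "unit_weight_graph n W \<Longrightarrow> u < n \<Longrightarrow> v < n \<Longrightarrow> 0 \<le> W u v"
  using uw_W01 by fastforce
lemma uw_le1: "unit_weight_graph n W \<Longrightarrow> u < n \<Longrightarrow> v < n \<Longrightarrow> W u v \<le> 1"
  using uw_W01 by fastforce
lemma uw_sym: "unit_weight_graph n W \<Longrightarrow> u < n \<Longrightarrow> v < n \<Longrightarrow> W u v = W v u"
  unfolding unit_weight_graph_def by blast
lemma uw_diag: "unit_weight_graph n W \<Longrightarrow> v < n \<Longrightarrow> W v v = 1"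
  unfolding unit_weight_graph_def by blast

lemma feasible_one: "unit_weight_graph n W \<Longrightarrow> feasible n W (\<lambda>_. 1)"
  unfolding feasible_def
proof (intro conjI allI impI)
  fix v assume W: "unit_weight_graph n W" and v: "v < n"
  have "W v v * 1 \<le> (\<Sum>v'<n. W v v' * 1)"
    using v by (intro member_le_sum) (auto intro: uw_nn[OF W])
  thus "1 \<le> (\<Sum>v'<n. W v v' * 1)" using uw_diag[OF W v] by simp
qed simp

lemma feasible_sum_ge1:
  assumes W: "unit_weight_graph n W" and n: "0 < n" and f: "feasible n W \<theta>"
  shows "1 \<le> (\<Sum>v<n. \<theta> v)"
proof -
  have "1 \<le> (\<Sum>v'<n. W 0 v' * \<theta> v')" using f n unfolding feasible_def by blast
  also have "\<dots> \<le> (\<Sum>v<n. \<theta> v)"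
    using f n by (intro sum_mono) (auto simp: feasible_def intro!: mult_left_le_one_le uw_nn[OF W] uw_le1[OF W])
  finally show ?thesis .
qed

lemma OPT_set_ne: "unit_weight_graph n W \<Longrightarrow> {(\<Sum>v<n. \<theta> v) | \<theta>. feasible n W \<theta>} \<noteq> {}"
  using feasible_one by blast

lemma OPT_ge1:
  assumes W: "unit_weight_graph n W" and n: "0 < n"
  shows "OPT n W \<ge> 1"
  unfolding OPT_def
  by (rule cInf_greatest[OF OPT_set_ne[OF W]]) (auto intro: feasible_sum_ge1[OF W n])

lemma OPT_le:
  assumes "feasible n W \<theta>"
  shows "OPT n W \<le> (\<Sum>v<n. \<theta> v)"
  unfolding OPT_def
proof (rule cInf_lower)
  show "(\<Sum>v<n. \<theta> v) \<in> {(\<Sum>v<n. \<theta> v) | \<theta>. feasible n W \<theta>}" using assms by blast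
  show "bdd_below {(\<Sum>v<n. \<theta> v) | \<theta>. feasible n W \<theta>}"
    by (rule bdd_belowI[of _ 0]) (auto simp: feasible_def intro: sum_nonneg)
qed

lemma good_theta:
  assumes W: "unit_weight_graph n W" and n: "0 < n"
  obtains \<theta> where "\<forall>v<n. 0 \<le> \<theta> v \<and> \<theta> v \<le> 1" "\<forall>v<n. (\<Sum>v'<n. W v v' * \<theta> v') \<ge> 1"
    "(\<Sum>v<n. \<theta> v) \<le> 2 * OPT n W"
proof -
  have "OPT n W < 2 * OPT n W" using OPT_ge1[OF W n] by simp
  then obtain s where "s \<in> {(\<Sum>v<n. \<theta> v) | \<theta>. feasible n W \<theta>}" "s < 2 * OPT n W"
    using cInf_lessD[OF OPT_set_ne[OF W]] unfolding OPT_def by blast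
  then obtain \<theta> where f: "feasible n W \<theta>" and s: "(\<Sum>v<n. \<theta> v) < 2 * OPT n W" by blast
  define \<theta>' where "\<theta>' = (\<lambda>v. min 1 (\<theta> v))"
  have 1: "\<forall>v<n. 0 \<le> \<theta>' v \<and> \<theta>' v \<le> 1" using f unfolding feasible_def \<theta>'_def by auto
  have 2: "\<forall>v<n. (\<Sum>v'<n. W v v' * \<theta>' v') \<ge> 1"
  proof (intro allI impI)
    fix v assume v: "v < n"
    show "(\<Sum>v'<n. W v v' * \<theta>' v') \<ge> 1"
    proof (cases "\<exists>v'<n. W v v' = 1 \<and> \<theta> v' \<ge> 1")
      case True
      then obtain v' where v': "v' < n" "W v v' = 1" "\<theta> v' \<ge> 1" by blast
      have "W v v' * \<theta>' v' \<le> (\<Sum>v'<n. W v v' * \<theta>' v')"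
        using v' 1 by (intro member_le_sum) (auto intro!: mult_nonneg_nonneg uw_nn[OF W v])
      thus ?thesis using v' unfolding \<theta>'_def by simp
    next
      case False
      have "(\<Sum>v'<n. W v v' * \<theta>' v') = (\<Sum>v'<n. W v v' * \<theta> v')"
      proof (intro sum.cong refl)
        fix v' assume "v' \<in> {..<n}"
        hence "v' < n" by simp
        thus "W v v' * \<theta>' v' = W v v' * \<theta> v'"
          using False uw_W01[OF W v, of v'] unfolding \<theta>'_def by auto
      qed
      thus ?thesis using f v unfolding feasible_def by simp
    qed
  qed
  have "(\<Sum>v<n. \<theta>' v) \<le> (\<Sum>v<n. \<theta> v)" unfolding \<theta>'_def by (intro sum_mono) simp
  with s have 3: "(\<Sum>v<n. \<theta>' v) \<le> 2 * OPT n W" by simp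
  show ?thesis using that 1 2 3 by blast
qed

definition indep :: "nat \<Rightarrow> (nat \<Rightarrow> nat \<Rightarrow> real) \<Rightarrow> nat set \<Rightarrow> bool" where
  "indep n W J \<longleftrightarrow> J \<subseteq> {..<n} \<and> (\<forall>u\<in>J. \<forall>v\<in>J. u \<noteq> v \<longrightarrow> W u v = 0)"

lemma max_indep:
  assumes W: "unit_weight_graph n W"
  obtains J where "indep n W J" "\<forall>v<n. \<exists>u\<in>J. W v u = 1"
proof -
  have "\<exists>J. indep n W J \<and> (\<forall>J'. indep n W J' \<longrightarrow> card J' \<le> card J)"
  proof (rule Lattices_Big.ex_has_greatest_nat[where k = "{}" and b = "Suc n"])
    show "indep n W {}" unfolding indep_def by simp
    show "\<forall>y. indep n W y \<longrightarrow> card y < Suc n"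
    proof (intro allI impI)
      fix y assume "indep n W y"
      hence "y \<subseteq> {..<n}" unfolding indep_def by simp
      hence "card y \<le> n" using card_mono[of "{..<n}" y] by simp
      thus "card y < Suc n" by simp
    qed
  qed
  then obtain J where J: "indep n W J" and mx: "\<forall>J'. indep n W J' \<longrightarrow> card J' \<le> card J" by blast
  have "\<forall>v<n. \<exists>u\<in>J. W v u = 1"
  proof (intro allI impI, rule ccontr)
    fix v assume v: "v < n" and nd: "\<not> (\<exists>u\<in>J. W v u = 1)"
    have vJ: "v \<notin> J" using nd uw_diag[OF W v] by blast
    have "indep n W (insert v J)"
      unfolding indep_def
    proof (intro conjI ballI impI)
      show "insert v J \<subseteq> {..<n}" using J v unfolding indep_def by auto
      fix x y assume x: "x \<in> insert v J" and y: "y \<in> insert v J" and xy: "x \<noteq> y"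
      have xn: "x < n" and yn: "y < n" using x y J v unfolding indep_def by auto
      show "W x y = 0"
      proof (cases "x = v")
        case True
        hence "y \<in> J" using y xy by simp
        thus ?thesis using nd True uw_W01[OF W xn yn] by auto
      next
        case False
        hence xJ: "x \<in> J" using x by simp
        show ?thesis
        proof (cases "y = v")
          case True
          have "W v x \<noteq> 1" using nd xJ by blast
          hence "W x y \<noteq> 1" using True uw_sym[OF W xn yn] by simp
          thus ?thesis using uw_W01[OF W xn yn] by auto
        next
          case False
          hence "y \<in> J" using y by simp
          thus ?thesis using J xJ xy unfolding indep_def by blast
        qed
      qed
    qed
    hence "card (insert v J) \<le> card J" using mx by blast
    moreover have "finite J" using J unfolding indep_def using finite_subset by blast
    ultimately show False using vJ by simp
  qed
  thus ?thesis using that J by blast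
qed



lemma J_Xf:
  assumes "indep n W J" shows "Xf n (\<lambda>v. v \<in> J) = card J"
proof -
  have "{..<n} \<inter> {x. x \<in> J} = J" using assms unfolding indep_def by auto
  thus ?thesis unfolding Xf_def by simp
qed

lemma J_Ef:
  assumes "indep n W J" shows "Ef n W (\<lambda>v. v \<in> J) = 0"
  unfolding Ef_def using assms unfolding indep_def
  by (intro sum.neutral ballI) auto

lemma J_Ff:
  fixes \<theta> :: "nat \<Rightarrow> real"
  assumes W: "unit_weight_graph n W" and J: "indep n W J" and dom: "\<forall>v<n. \<exists>u\<in>J. W v u = 1"
    and th01: "\<forall>v<n. 0 \<le> \<theta> v \<and> \<theta> v \<le> 1" and feas: "\<forall>v<n. (\<Sum>v'<n. W v v' * \<theta> v') \<ge> 1"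
  shows "Ff n W (\<lambda>v. v \<in> J) - n \<ge> card J - (\<Sum>v<n. \<theta> v)"
    and "Ff n W (\<lambda>v. v \<in> J) \<ge> n"
proof -
  define cov where "cov v = (\<Sum>v'<n. W v v' * of_bool (v' \<in> J))" for v
  have Jn: "J \<subseteq> {..<n}" using J unfolding indep_def by simp
  have cov1: "cov v \<ge> 1" if v: "v < n" for v
  proof -
    obtain u where u: "u \<in> J" "W v u = 1" using dom v by blast
    have un: "u < n" using u Jn by auto
    have "W v u * of_bool (u \<in> J) \<le> cov v" unfolding cov_def
      using un by (intro member_le_sum) (auto intro: uw_nn[OF W v])
    thus ?thesis using u by simp
  qed
  have Ff: "Ff n W (\<lambda>v. v \<in> J) = (\<Sum>v<n. cov v)" unfolding Ff_def cov_def by simp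
  have "(\<Sum>v<n. \<theta> v * cov v) = (\<Sum>v<n. \<Sum>v'<n. \<theta> v * W v v' * of_bool (v' \<in> J))"
    unfolding cov_def sum_distrib_left mult.assoc by (rule refl)
  also have "\<dots> = (\<Sum>v'<n. \<Sum>v<n. \<theta> v * W v v' * of_bool (v' \<in> J))" by (rule sum.swap)
  also have "\<dots> = (\<Sum>v'<n. of_bool (v' \<in> J) * (\<Sum>v<n. W v' v * \<theta> v))"
    by (intro sum.cong refl) (auto simp: sum_distrib_left uw_sym[OF W] intro!: sum.cong)
  also have "\<dots> \<ge> (\<Sum>v'<n. of_bool (v' \<in> J))"
    using feas by (intro sum_mono) auto
  finally have 1: "(\<Sum>v<n. \<theta> v * cov v) \<ge> card J" using J_Xf[OF J] unfolding Xf_def by simp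
  have "(\<Sum>v<n. cov v - 1) \<ge> (\<Sum>v<n. \<theta> v * (cov v - 1))"
  proof (intro sum_mono)
    fix v assume "v \<in> {..<n}"
    hence v: "v < n" by simp
    have "\<theta> v * (cov v - 1) \<le> 1 * (cov v - 1)"
      using th01 v cov1[OF v] by (intro mult_right_mono) auto
    thus "\<theta> v * (cov v - 1) \<le> cov v - 1" by simp
  qed
  also have "(\<Sum>v<n. \<theta> v * (cov v - 1)) = (\<Sum>v<n. \<theta> v * cov v) - (\<Sum>v<n. \<theta> v)"
    by (simp add: algebra_simps sum_subtractf)
  finally have "(\<Sum>v<n. cov v) - n \<ge> card J - (\<Sum>v<n. \<theta> v)"
    using 1 by (simp add: sum_subtractf)
  thus "Ff n W (\<lambda>v. v \<in> J) - n \<ge> card J - (\<Sum>v<n. \<theta> v)" using Ff by simp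
  have "(\<Sum>v<n. cov v) \<ge> (\<Sum>v<n. (1::real))" using cov1 by (intro sum_mono) auto
  thus "Ff n W (\<lambda>v. v \<in> J) \<ge> n" using Ff by simp
qed

definition prodA :: "nat \<Rightarrow> (nat \<Rightarrow> real) \<Rightarrow> (nat \<Rightarrow> bool) pmf" where
  "prodA n \<theta> = Pi_pmf {..<n} False (\<lambda>v. bernoulli_pmf (\<theta> v))"

lemma finite_bool_funs: "finite {f :: nat \<Rightarrow> bool. \<forall>x. x \<notin> {..<n} \<longrightarrow> f x = False}"
proof -
  have "{f :: nat \<Rightarrow> bool. \<forall>x. x \<notin> {..<n} \<longrightarrow> f x = False} \<subseteq> (\<lambda>S x. x \<in> S) ` Pow {..<n}"
  proof
    fix f :: "nat \<Rightarrow> bool" assume "f \<in> {f. \<forall>x. x \<notin> {..<n} \<longrightarrow> f x = False}"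
    hence "f = (\<lambda>x. x \<in> {x. f x})" "{x. f x} \<in> Pow {..<n}" by auto
    thus "f \<in> (\<lambda>S x. x \<in> S) ` Pow {..<n}" by blast
  qed
  thus ?thesis by (rule finite_subset) simp
qed

lemma prodA_finite: "finite (set_pmf (prodA n \<theta>))"
  unfolding prodA_def
  by (rule finite_subset[OF set_Pi_pmf_subset finite_bool_funs]) simp

lemma prodA_marg:
  fixes \<theta> :: "nat \<Rightarrow> real"
  assumes "v < n" "0 \<le> \<theta> v" "\<theta> v \<le> 1"
  shows "measure_pmf.expectation (prodA n \<theta>) (\<lambda>f. of_bool (f v)) = \<theta> v"
proof -
  have "measure_pmf.expectation (prodA n \<theta>) (\<lambda>f. (of_bool (f v) :: real))
      = measure_pmf.expectation (map_pmf (\<lambda>f. f v) (prodA n \<theta>)) of_bool" by simp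
  also have "map_pmf (\<lambda>f. f v) (prodA n \<theta>) = bernoulli_pmf (\<theta> v)"
    unfolding prodA_def using assms by (subst Pi_pmf_component) auto
  finally show ?thesis using assms by simp
qed

lemma prodA_pair:
  fixes \<theta> :: "nat \<Rightarrow> real"
  assumes "v < n" "v' < n" "v \<noteq> v'" "\<forall>x<n. 0 \<le> \<theta> x \<and> \<theta> x \<le> 1"
  shows "measure_pmf.expectation (prodA n \<theta>) (\<lambda>f. of_bool (f v) * of_bool (f v')) = \<theta> v * \<theta> v'"
proof -
  define g where "g x b = (if x = v \<or> x = v' then of_bool b else (1::real))" for x b
  have pr: "(\<Prod>x<n. g x (f x)) = of_bool (f v) * of_bool (f v')" for f
  proof -
    have "(\<Prod>x<n. g x (f x)) = (\<Prod>x\<in>{v,v'}. g x (f x))"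
      using assms by (intro prod.mono_neutral_right) (auto simp: g_def)
    thus ?thesis using assms by (simp add: g_def)
  qed
  have pe: "(\<Prod>x<n. measure_pmf.expectation (bernoulli_pmf (\<theta> x)) (g x)) = \<theta> v * \<theta> v'"
  proof -
    have "(\<Prod>x<n. measure_pmf.expectation (bernoulli_pmf (\<theta> x)) (g x))
        = (\<Prod>x\<in>{v,v'}. measure_pmf.expectation (bernoulli_pmf (\<theta> x)) (g x))"
      using assms by (intro prod.mono_neutral_right) (auto simp: g_def)
    thus ?thesis using assms by (simp add: g_def)
  qed
  have "measure_pmf.expectation (prodA n \<theta>) (\<lambda>f. \<Prod>x<n. g x (f x))
      = (\<Prod>x<n. measure_pmf.expectation (bernoulli_pmf (\<theta> x)) (g x))"
    unfolding prodA_def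
    by (rule expectation_prod_Pi_pmf) (auto simp: g_def intro!: integrable_measure_pmf_finite)
  thus ?thesis using pr pe by simp
qed

lemma prodA_calc:
  fixes \<theta> :: "nat \<Rightarrow> real"
  assumes W: "unit_weight_graph n W" and th01: "\<forall>v<n. 0 \<le> \<theta> v \<and> \<theta> v \<le> 1"
    and feas: "\<forall>v<n. (\<Sum>v'<n. W v v' * \<theta> v') \<ge> 1"
  shows "measure_pmf.expectation (prodA n \<theta>) (Xf n) = (\<Sum>v<n. \<theta> v)"
    and "measure_pmf.expectation (prodA n \<theta>) (Ff n W) \<ge> n"
    and "measure_pmf.expectation (prodA n \<theta>) (Ef n W) \<le> (\<Sum>v<n. \<theta> v)^2"
    and "measure_pmf.expectation (prodA n \<theta>) (Ef n W) \<ge> 0"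
proof -
  have int: "integrable (measure_pmf (prodA n \<theta>)) g" for g :: "_ \<Rightarrow> real"
    by (rule integrable_measure_pmf_finite[OF prodA_finite])
  show "measure_pmf.expectation (prodA n \<theta>) (Xf n) = (\<Sum>v<n. \<theta> v)"
    unfolding Xf_def using th01
    by (subst Bochner_Integration.integral_sum) (auto simp: int prodA_marg simp del: sum_of_bool_eq)
  have "measure_pmf.expectation (prodA n \<theta>) (Ff n W) = (\<Sum>v<n. \<Sum>v'<n. measure_pmf.expectation (prodA n \<theta>) (\<lambda>f. W v v' * of_bool (f v')))"
    unfolding Ff_def by (simp only: Bochner_Integration.integral_sum int)
  also have "\<dots> = (\<Sum>v<n. \<Sum>v'<n. W v v' * \<theta> v')"
    using th01 by (intro sum.cong refl) (simp only: integral_mult_right_zero prodA_marg lessThan_iff)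
  also have "\<dots> \<ge> (\<Sum>v<n. (1::real))" using feas by (intro sum_mono) auto
  finally show "measure_pmf.expectation (prodA n \<theta>) (Ff n W) \<ge> n" by simp
  have "measure_pmf.expectation (prodA n \<theta>) (Ef n W) = (\<Sum>v<n. \<Sum>v'\<in>{..<n}-{v}. measure_pmf.expectation (prodA n \<theta>) (\<lambda>f. W v v' * (of_bool (f v) * of_bool (f v'))))"
    unfolding Ef_def mult.assoc by (simp only: Bochner_Integration.integral_sum int)
  also have "\<dots> = (\<Sum>v<n. \<Sum>v'\<in>{..<n}-{v}. W v v' * (\<theta> v * \<theta> v'))"
  proof (intro sum.cong refl)
    fix v v' assume "v \<in> {..<n}" "v' \<in> {..<n} - {v}"
    thus "measure_pmf.expectation (prodA n \<theta>) (\<lambda>f. W v v' * (of_bool (f v) * of_bool (f v'))) = W v v' * (\<theta> v * \<theta> v')"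
      using th01 prodA_pair[of v n v' \<theta>] by (simp only: integral_mult_right_zero) auto
  qed
  finally have E: "measure_pmf.expectation (prodA n \<theta>) (Ef n W) = (\<Sum>v<n. \<Sum>v'\<in>{..<n}-{v}. W v v' * (\<theta> v * \<theta> v'))" .
  also have "\<dots> \<le> (\<Sum>v<n. \<Sum>v'<n. \<theta> v * \<theta> v')"
  proof (intro sum_mono)
    fix v assume v: "v \<in> {..<n}"
    have "(\<Sum>v'\<in>{..<n}-{v}. W v v' * (\<theta> v * \<theta> v')) \<le> (\<Sum>v'\<in>{..<n}-{v}. \<theta> v * \<theta> v')"
      using v th01 by (intro sum_mono) (auto intro!: mult_left_le_one_le uw_nn[OF W] uw_le1[OF W])
    also have "\<dots> \<le> (\<Sum>v'<n. \<theta> v * \<theta> v')"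
      using v th01 by (intro sum_mono2) auto
    finally show "(\<Sum>v'\<in>{..<n}-{v}. W v v' * (\<theta> v * \<theta> v')) \<le> (\<Sum>v'<n. \<theta> v * \<theta> v')" .
  qed
  also have "\<dots> = (\<Sum>v<n. \<theta> v)^2"
    by (simp add: power2_eq_square sum_product)
  finally show "measure_pmf.expectation (prodA n \<theta>) (Ef n W) \<le> (\<Sum>v<n. \<theta> v)^2" .
  show "measure_pmf.expectation (prodA n \<theta>) (Ef n W) \<ge> 0"
    unfolding E using th01 by (intro sum_nonneg) (auto intro!: mult_nonneg_nonneg uw_nn[OF W])
qed



lemma mix_expect:
  fixes g :: "(nat \<Rightarrow> bool) \<Rightarrow> real"
  assumes "0 \<le> \<rho>" "\<rho> \<le> 1" "finite (set_pmf A)"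
  shows "measure_pmf.expectation (bind_pmf (bernoulli_pmf \<rho>) (\<lambda>b. if b then return_pmf fJ else A)) g
         = \<rho> * g fJ + (1 - \<rho>) * measure_pmf.expectation A g"
proof -
  have "measure_pmf.expectation (bind_pmf (bernoulli_pmf \<rho>) (\<lambda>b. if b then return_pmf fJ else A)) g
      = (\<Sum>b\<in>UNIV. pmf (bernoulli_pmf \<rho>) b *\<^sub>R measure_pmf.expectation (if b then return_pmf fJ else A) g)"
    using assms by (intro pmf_expectation_bind) auto
  also have "\<dots> = \<rho> * g fJ + (1 - \<rho>) * measure_pmf.expectation A g"
    using assms by (simp add: UNIV_bool)
  finally show ?thesis .
qed

lemma part1_n0:
  "\<exists>\<Sigma> \<phi>. is_scheme 0 \<Sigma> \<phi> \<and> card \<Sigma> = 2 \<and> persuasive 0 W \<phi> \<and> cost 0 \<phi> \<le> C * sqrt (real 0) * OPT 0 W"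
proof -
  define \<phi> where "\<phi> = (\<lambda>_ :: nat \<Rightarrow> nat. return_pmf (\<lambda>_ :: nat. 0 :: real))"
  have "is_scheme 0 {0, 1} \<phi>" unfolding is_scheme_def \<phi>_def by auto
  moreover have "persuasive 0 W \<phi>" unfolding persuasive_def by simp
  moreover have "cost 0 \<phi> = 0" unfolding cost_def by (simp add: case_prod_unfold)
  ultimately show ?thesis by fastforce
qed

lemma part1:
  assumes W: "unit_weight_graph n W"
  shows "\<exists>\<Sigma> \<phi>. is_scheme n \<Sigma> \<phi> \<and> card \<Sigma> = 2 \<and> persuasive n W \<phi> \<and> cost n \<phi> \<le> 5 * sqrt (real n) * OPT n W"
proof (cases "n = 0")
  case True
  thus ?thesis using part1_n0 by blast
next
  case False
  hence n: "0 < n" by simp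
  define Op where "Op = OPT n W"
  have O1: "Op \<ge> 1" unfolding Op_def by (rule OPT_ge1[OF W n])
  obtain \<theta> where th01: "\<forall>v<n. 0 \<le> \<theta> v \<and> \<theta> v \<le> 1" and feas: "\<forall>v<n. (\<Sum>v'<n. W v v' * \<theta> v') \<ge> 1"
    and ths: "(\<Sum>v<n. \<theta> v) \<le> 2 * Op" using good_theta[OF W n] unfolding Op_def by blast
  obtain J where J: "indep n W J" and dom: "\<forall>v<n. \<exists>u\<in>J. W v u = 1" using max_indep[OF W] by blast
  define fJ where "fJ = (\<lambda>v. v \<in> J)"
  have Jn: "J \<subseteq> {..<n}" using J unfolding indep_def by simp
  have finJ: "finite J" using Jn finite_subset by blast
  have cJ: "card J \<ge> 1"
  proof -
    obtain u where "u \<in> J" using dom n by blast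
    thus ?thesis using finJ by (simp add: Suc_le_eq card_gt_0_iff) blast
  qed
  have cJn: "card J \<le> n" using card_mono[OF _ Jn] by simp
  have sn: "sqrt (real n) \<ge> 1" using n by simp
  have XJ: "Xf n fJ = card J" unfolding fJ_def by (rule J_Xf[OF J])
  have EJ: "Ef n W fJ = 0" unfolding fJ_def by (rule J_Ef[OF J])
  have FJ1: "Ff n W fJ - n \<ge> card J - (\<Sum>v<n. \<theta> v)" and FJ2: "Ff n W fJ \<ge> n"
    unfolding fJ_def using J_Ff[OF W J dom th01 feas] by auto
  show ?thesis
  proof (cases "card J \<le> 3 * sqrt n * Op")
    case True
    define M where "M = return_pmf fJ"
    have "\<exists>\<Sigma> \<phi>. is_scheme n \<Sigma> \<phi> \<and> card \<Sigma> = 2 \<and> persuasive n W \<phi> \<and>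
            cost n \<phi> \<le> measure_pmf.expectation M (Xf n)"
      by (rule scheme_from_sets[OF W]) (use XJ EJ FJ2 cJ in \<open>auto simp: M_def\<close>)
    moreover have "measure_pmf.expectation M (Xf n) \<le> 5 * sqrt n * Op"
      using True XJ O1 sn unfolding M_def by simp
    ultimately show ?thesis unfolding Op_def by fastforce
  next
    case False
    hence big: "card J > 3 * sqrt n * Op" by simp
    define s where "s = (\<Sum>v<n. \<theta> v)"
    have s0: "s \<ge> 0" unfolding s_def using th01 by (intro sum_nonneg) auto
    have "3 * sqrt n \<le> 3 * sqrt n * Op" using O1 sn by simp
    hence "3 * sqrt n < n" using big cJn by linarith
    hence lt: "3 * sqrt n < n" .
    have sn3: "sqrt n > 3"
    proof (rule ccontr)
      assume "\<not> sqrt n > 3"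
      hence "sqrt n * sqrt n \<le> 3 * sqrt n" by (intro mult_right_mono) auto
      thus False using lt by simp
    qed
    have J4: "card J \<ge> 2 * s"
    proof -
      have "2 * s \<le> 4 * Op" using ths s_def by simp
      also have "\<dots> \<le> 3 * sqrt n * Op" using sn3 O1 by simp
      finally show ?thesis using big by simp
    qed
    define \<rho> where "\<rho> = sqrt (8 * n) * Op / card J"
    have s8: "sqrt (8 * real n) \<le> 3 * sqrt n"
    proof -
      have "sqrt (8 * real n) = sqrt 8 * sqrt n" by (simp add: real_sqrt_mult)
      moreover have "sqrt 8 \<le> (3::real)" by (rule real_le_lsqrt) auto
      ultimately show ?thesis using sn by simp
    qed
    have cJpos: "real (card J) > 0" using cJ by simp
    have rho_pos: "\<rho> > 0" unfolding \<rho>_def using O1 n cJpos by simp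
    have rho_le: "\<rho> \<le> 1"
    proof -
      have "sqrt (8 * n) * Op \<le> 3 * sqrt n * Op" using s8 O1 by simp
      hence "sqrt (8 * n) * Op \<le> card J" using big by simp
      thus ?thesis unfolding \<rho>_def using cJpos by simp
    qed
    have rJ: "\<rho> * card J = sqrt (8 * n) * Op" unfolding \<rho>_def using cJpos by simp
    have rJ2: "(\<rho> * card J)^2 = 8 * n * Op^2" unfolding rJ by (simp add: power_mult_distrib)
    define A where "A = prodA n \<theta>"
    define M where "M = bind_pmf (bernoulli_pmf \<rho>) (\<lambda>b. if b then return_pmf fJ else A)"
    have finA: "finite (set_pmf A)" unfolding A_def by (rule prodA_finite)
    have EM: "measure_pmf.expectation M g = \<rho> * g fJ + (1 - \<rho>) * measure_pmf.expectation A g" for g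
      unfolding M_def using rho_pos rho_le finA by (intro mix_expect) auto
    have finM: "finite (set_pmf M)"
      unfolding M_def using finA by (auto intro: finite_subset)
    have XA: "measure_pmf.expectation A (Xf n) = s" and FA: "measure_pmf.expectation A (Ff n W) \<ge> n"
      and EA: "measure_pmf.expectation A (Ef n W) \<le> s^2" and EA0: "measure_pmf.expectation A (Ef n W) \<ge> 0"
      unfolding A_def s_def using prodA_calc[OF W th01 feas] by auto
    define X where "X = measure_pmf.expectation M (Xf n)"
    define F where "F = measure_pmf.expectation M (Ff n W)"
    define Ey where "Ey = measure_pmf.expectation M (Ef n W)"
    have Xv: "X = \<rho> * card J + (1 - \<rho>) * s" unfolding X_def EM XA XJ ..
    have X1: "X \<ge> \<rho> * card J" using Xv rho_le s0 by simp
    have "\<rho> * card J > 0" using rho_pos cJpos by simp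
    hence Xpos: "X > 0" using X1 by simp
    have F1: "F - n \<ge> \<rho> * card J / 2"
    proof -
      have "F - n = \<rho> * (Ff n W fJ - n) + (1 - \<rho>) * (measure_pmf.expectation A (Ff n W) - n)"
        unfolding F_def EM by (simp add: algebra_simps)
      moreover have "(1 - \<rho>) * (measure_pmf.expectation A (Ff n W) - n) \<ge> 0"
        using rho_le FA by simp
      moreover have "\<rho> * (Ff n W fJ - n) \<ge> \<rho> * (card J / 2)"
        using FJ1 J4 rho_pos unfolding s_def[symmetric] by (intro mult_left_mono) auto
      ultimately show ?thesis by simp
    qed
    have Eyv: "Ey = (1 - \<rho>) * measure_pmf.expectation A (Ef n W)" unfolding Ey_def EM EJ by simp
    have "Ey \<le> measure_pmf.expectation A (Ef n W)" unfolding Eyv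
      using EA0 rho_le rho_pos by (intro mult_left_le_one_le) auto
    hence Ey1: "Ey \<le> s^2" using EA by simp
    have "X * (F - n) \<ge> (\<rho> * card J) * (\<rho> * card J / 2)"
      using X1 F1 rho_pos cJpos Xpos by (intro mult_mono) auto
    also have "(\<rho> * card J) * (\<rho> * card J / 2) = 4 * n * Op^2"
      using rJ2 by (simp add: power2_eq_square)
    also have "4 * n * Op^2 \<ge> n * s^2"
    proof -
      have "s^2 \<le> (2 * Op)^2" using ths s0 unfolding s_def[symmetric] by (intro power_mono) auto
      hence "s^2 \<le> 4 * Op^2" by (simp add: power_mult_distrib)
      hence "n * s^2 \<le> n * (4 * Op^2)" by (intro mult_left_mono) auto
      thus ?thesis by simp
    qed
    finally have c1: "X * (F - n) \<ge> n * s^2" .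
    have "n * Ey \<le> n * s^2" using Ey1 by (intro mult_left_mono) auto
    hence cond: "X * (F - n) \<ge> n * Ey" using c1 by simp
    have "\<exists>\<Sigma> \<phi>. is_scheme n \<Sigma> \<phi> \<and> card \<Sigma> = 2 \<and> persuasive n W \<phi> \<and>
            cost n \<phi> \<le> measure_pmf.expectation M (Xf n)"
      by (rule scheme_from_sets[OF W finM]) (use Xpos cond in \<open>auto simp: X_def F_def Ey_def\<close>)
    moreover have "X \<le> 5 * sqrt n * Op"
    proof -
      have "(1 - \<rho>) * s \<le> s" using rho_pos s0 by (simp add: algebra_simps)
      hence "X \<le> \<rho> * card J + s" using Xv by simp
      also have "\<dots> \<le> 3 * sqrt n * Op + 2 * sqrt n * Op"
      proof -
        have "\<rho> * card J \<le> 3 * sqrt n * Op" unfolding rJ using s8 O1 by (intro mult_right_mono) auto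
        moreover have "2 * Op \<le> 2 * sqrt n * Op" using sn O1 by simp
        ultimately show ?thesis using ths unfolding s_def[symmetric] by linarith
      qed
      finally show ?thesis by (simp add: mult.commute mult.left_commute)
    qed
    ultimately show ?thesis unfolding Op_def X_def by fastforce
  qed
qed



definition good :: "nat \<Rightarrow> real set \<Rightarrow> ((nat \<Rightarrow> nat) \<times> (nat \<Rightarrow> real)) \<Rightarrow> bool" where
  "good n \<Sigma> \<omega> \<longleftrightarrow> fst \<omega> \<in> type_profiles n \<and> (\<forall>v<n. snd \<omega> v \<in> \<Sigma>)"

lemma AE_good:
  assumes "is_scheme n \<Sigma> \<phi>"
  shows "AE \<omega> in measure_pmf (joint n \<phi>). good n \<Sigma> \<omega>"
proof (rule AE_pmfI)
  fix y assume "y \<in> set_pmf (joint n \<phi>)"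
  moreover have "type_profiles n \<noteq> {}" "finite (type_profiles n)" using tp_nonempty tp_finite by blast+
  ultimately have "fst y \<in> type_profiles n" "snd y \<in> set_pmf (\<phi> (fst y))"
    unfolding joint_def by auto
  thus "good n \<Sigma> y" using assms unfolding good_def is_scheme_def by blast
qed

lemma good_01: "is_scheme n \<Sigma> \<phi> \<Longrightarrow> good n \<Sigma> \<omega> \<Longrightarrow> v < n \<Longrightarrow> 0 \<le> snd \<omega> v \<and> snd \<omega> v \<le> 1"
  unfolding is_scheme_def good_def by auto

lemma integrable_AE_bound:
  fixes f :: "_ \<Rightarrow> real"
  assumes "AE \<omega> in measure_pmf M. \<bar>f \<omega>\<bar> \<le> B"
  shows "integrable (measure_pmf M) f"
  using assms by (intro measure_pmf.integrable_const_bound[where B = B]) auto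

definition Yi :: "nat \<Rightarrow> (nat \<Rightarrow> nat \<Rightarrow> real) \<Rightarrow> nat \<Rightarrow> ((nat \<Rightarrow> nat) \<times> (nat \<Rightarrow> real)) \<Rightarrow> real" where
  "Yi n W i \<omega> = (\<Sum>v'\<in>{..<n}-{fst \<omega> i}. W (fst \<omega> i) v' * snd \<omega> v')"

lemma Yi_bound:
  assumes W: "unit_weight_graph n W" and sch: "is_scheme n \<Sigma> \<phi>" and i: "i < n" and g: "good n \<Sigma> \<omega>"
  shows "\<bar>Yi n W i \<omega>\<bar> \<le> n"
proof -
  have ti: "fst \<omega> i < n" using g i tp_range unfolding good_def by blast
  have "\<bar>Yi n W i \<omega>\<bar> \<le> (\<Sum>v'\<in>{..<n}-{fst \<omega> i}. \<bar>W (fst \<omega> i) v' * snd \<omega> v'\<bar>)"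
    unfolding Yi_def by (rule sum_abs)
  also have "\<dots> \<le> (\<Sum>v'\<in>{..<n}-{fst \<omega> i}. 1)"
  proof (intro sum_mono)
    fix v' assume "v' \<in> {..<n}-{fst \<omega> i}"
    hence v': "v' < n" by simp
    have "\<bar>W (fst \<omega> i) v'\<bar> \<le> 1" using uw_nn[OF W ti v'] uw_le1[OF W ti v'] by simp
    moreover have "\<bar>snd \<omega> v'\<bar> \<le> 1" using good_01[OF sch g v'] by simp
    ultimately show "\<bar>W (fst \<omega> i) v' * snd \<omega> v'\<bar> \<le> 1"
      by (simp add: abs_mult mult_le_one)
  qed
  also have "\<dots> \<le> n" using card_Diff1_le[of "{..<n}" "fst \<omega> i"] by simp
  finally show ?thesis .
qed

lemma agent_theta:
  assumes W: "unit_weight_graph n W" and sch: "is_scheme n \<Sigma> \<phi>" and pers: "persuasive n W \<phi>"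
    and i: "i < n"
  shows "measure_pmf.expectation (joint n \<phi>)
           (\<lambda>\<omega>. indicator (signal_event i \<theta>) \<omega> * (snd \<omega> (fst \<omega> i) + Yi n W i \<omega> - 1))
         = (if \<theta> = 0 then max 0 (measure_pmf.expectation (joint n \<phi>)
           (\<lambda>\<omega>. indicator (signal_event i \<theta>) \<omega> * (snd \<omega> (fst \<omega> i) + Yi n W i \<omega> - 1))) else 0)"
proof -
  let ?J = "measure_pmf (joint n \<phi>)"
  let ?A = "signal_event i \<theta>"
  define P where "P = measure_pmf.prob (joint n \<phi>) ?A"
  define e where "e = measure_pmf.expectation (joint n \<phi>) (\<lambda>\<omega>. indicator ?A \<omega> * Yi n W i \<omega>)"
  have intY: "integrable ?J (\<lambda>\<omega>. indicator ?A \<omega> * Yi n W i \<omega>)"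
  proof (rule integrable_AE_bound[where B = n])
    show "AE \<omega> in ?J. \<bar>indicator ?A \<omega> * Yi n W i \<omega>\<bar> \<le> n"
      using AE_good[OF sch]
    proof eventually_elim
      case (elim \<omega>)
      have "\<bar>indicator ?A \<omega> * Yi n W i \<omega>\<bar> \<le> 1 * real n"
        unfolding abs_mult using Yi_bound[OF W sch i elim]
        by (intro mult_mono) (auto simp: indicator_def)
      thus ?case by simp
    qed
  qed
  have intI: "integrable ?J (indicator ?A :: _ \<Rightarrow> real)"
    by (rule integrable_AE_bound[where B = 1]) (auto simp: indicator_def)
  have lhs: "(\<lambda>\<omega>. indicator ?A \<omega> * (snd \<omega> (fst \<omega> i) + Yi n W i \<omega> - 1))
      = (\<lambda>\<omega>. (\<theta> - 1) * indicator ?A \<omega> + indicator ?A \<omega> * Yi n W i \<omega>)"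
    by (auto simp: fun_eq_iff indicator_def signal_event_def algebra_simps)
  have E: "measure_pmf.expectation (joint n \<phi>)
           (\<lambda>\<omega>. indicator ?A \<omega> * (snd \<omega> (fst \<omega> i) + Yi n W i \<omega> - 1)) = (\<theta> - 1) * P + e"
    unfolding lhs P_def e_def using intY intI by simp
  show ?thesis
  proof (cases "P = 0")
    case True
    have "AE \<omega> in ?J. \<omega> \<notin> ?A"
      using True unfolding P_def measure_pmf_zero_iff by (auto simp: AE_measure_pmf_iff)
    hence "e = measure_pmf.expectation (joint n \<phi>) (\<lambda>_. 0)"
      unfolding e_def by (intro integral_cong_AE) (auto elim!: eventually_mono)
    hence "e = 0" by simp
    with True E show ?thesis by (cases "\<theta> = 0") auto
  next
    case False
    hence Ppos: "P > 0" unfolding P_def by (simp add: order.not_eq_order_implies_strict)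
    have Qx: "Q n W \<phi> i x \<theta> = x + e / P" for x
    proof -
      have "(\<lambda>\<omega>. indicator ?A \<omega> * (case \<omega> of (t, s) \<Rightarrow> x + (\<Sum>v'\<in>{..<n} - {t i}. W (t i) v' * s v')))
          = (\<lambda>\<omega>. x * indicator ?A \<omega> + indicator ?A \<omega> * Yi n W i \<omega>)"
        by (auto simp: fun_eq_iff Yi_def algebra_simps)
      hence "Q n W \<phi> i x \<theta> = (x * P + e) / P"
        unfolding Q_def cond_exp_def P_def e_def using intY intI by simp
      thus ?thesis using Ppos by (simp add: field_simps)
    qed
    have pq: "1 \<le> Q n W \<phi> i \<theta> \<theta> \<and> \<theta> = (LEAST x. 0 \<le> x \<and> 1 \<le> Q n W \<phi> i x \<theta>)"
      using pers i Ppos unfolding persuasive_def P_def by blast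
    have L: "(LEAST x. 0 \<le> x \<and> 1 \<le> Q n W \<phi> i x \<theta>) = max 0 (1 - e / P)"
      unfolding Qx by (rule least_shift)
    have ge: "(\<theta> - 1) * P + e \<ge> 0"
    proof -
      have "1 \<le> \<theta> + e / P" using pq Qx by simp
      hence "P \<le> (\<theta> + e / P) * P" using Ppos by simp
      also have "\<dots> = \<theta> * P + e" using Ppos by (simp add: field_simps)
      finally show ?thesis by (simp add: algebra_simps)
    qed
    show ?thesis
    proof (cases "\<theta> = 0")
      case True
      thus ?thesis using E ge by simp
    next
      case False
      hence "\<theta> = 1 - e / P" using pq L by (auto simp: max_def split: if_splits)
      hence "(\<theta> - 1) * P + e = 0" using Ppos by (simp add: field_simps)
      thus ?thesis using E False by simp
    qed
  qed
qed



lemma good_W_sum: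
  assumes W: "unit_weight_graph n W" and g: "good n \<Sigma> \<omega>" and i: "i < n"
  shows "(\<Sum>v'<n. W (fst \<omega> i) v' * snd \<omega> v') = snd \<omega> (fst \<omega> i) + Yi n W i \<omega>"
proof -
  have ti: "fst \<omega> i < n" using g i tp_range unfolding good_def by blast
  show ?thesis unfolding Yi_def using ti uw_diag[OF W ti]
    by (subst sum.remove[of _ "fst \<omega> i"]) auto
qed

lemma Zsum_bound:
  assumes W: "unit_weight_graph n W" and sch: "is_scheme n \<Sigma> \<phi>" and g: "good n \<Sigma> \<omega>" and v: "v < n"
  shows "\<bar>(\<Sum>v'<n. W v v' * snd \<omega> v') - 1\<bar> \<le> n + 1"
proof -
  have "\<bar>(\<Sum>v'<n. W v v' * snd \<omega> v')\<bar> \<le> (\<Sum>v'<n. \<bar>W v v' * snd \<omega> v'\<bar>)" by (rule sum_abs)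
  also have "\<dots> \<le> (\<Sum>v'<n. 1)"
  proof (intro sum_mono)
    fix v' assume "v' \<in> {..<n}"
    hence v': "v' < n" by simp
    have "\<bar>W v v'\<bar> \<le> 1" using uw_nn[OF W v v'] uw_le1[OF W v v'] by simp
    moreover have "\<bar>snd \<omega> v'\<bar> \<le> 1" using good_01[OF sch g v'] by simp
    ultimately show "\<bar>W v v' * snd \<omega> v'\<bar> \<le> 1" by (simp add: abs_mult mult_le_one)
  qed
  finally show ?thesis by simp
qed

lemma lam_bound:
  assumes sch: "is_scheme n \<Sigma> \<phi>" and g: "good n \<Sigma> \<omega>" and v: "v < n"
  shows "\<bar>lam (snd \<omega> v)\<bar> \<le> (\<Sum>\<theta>\<in>\<Sigma>. \<bar>lam \<theta> :: real\<bar>)"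
proof -
  have "snd \<omega> v \<in> \<Sigma>" "finite \<Sigma>" using g v sch unfolding good_def is_scheme_def by auto
  thus ?thesis by (intro member_le_sum) auto
qed

lemma lamZ_bound:
  fixes lam :: "real \<Rightarrow> real"
  assumes W: "unit_weight_graph n W" and sch: "is_scheme n \<Sigma> \<phi>" and g: "good n \<Sigma> \<omega>"
  shows "\<bar>\<Sum>v<n. lam (snd \<omega> v) * ((\<Sum>v'<n. W v v' * snd \<omega> v') - 1)\<bar> \<le> n * ((\<Sum>\<theta>\<in>\<Sigma>. \<bar>lam \<theta>\<bar>) * (n + 1))"
proof -
  have "\<bar>\<Sum>v<n. lam (snd \<omega> v) * ((\<Sum>v'<n. W v v' * snd \<omega> v') - 1)\<bar>
       \<le> (\<Sum>v<n. \<bar>lam (snd \<omega> v) * ((\<Sum>v'<n. W v v' * snd \<omega> v') - 1)\<bar>)" by (rule sum_abs)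
  also have "\<dots> \<le> (\<Sum>v<n. (\<Sum>\<theta>\<in>\<Sigma>. \<bar>lam \<theta>\<bar>) * (n + 1))"
    unfolding abs_mult
    by (intro sum_mono mult_mono lam_bound[OF sch g] Zsum_bound[OF W sch g]) auto
  finally show ?thesis by (simp add: algebra_simps)
qed

lemma dual_sum:
  fixes lam :: "real \<Rightarrow> real"
  assumes W: "unit_weight_graph n W" and sch: "is_scheme n \<Sigma> \<phi>" and pers: "persuasive n W \<phi>"
    and lam0: "lam 0 \<ge> 0"
  shows "measure_pmf.expectation (joint n \<phi>)
           (\<lambda>\<omega>. \<Sum>v<n. lam (snd \<omega> v) * ((\<Sum>v'<n. W v v' * snd \<omega> v') - 1)) \<ge> 0"
proof -
  let ?J = "measure_pmf (joint n \<phi>)"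
  define Z where "Z i \<omega> = snd \<omega> (fst \<omega> i) + Yi n W i \<omega> - 1" for i \<omega>
  have finS: "finite \<Sigma>" using sch unfolding is_scheme_def by simp
  have AEeq: "AE \<omega> in ?J. (\<Sum>v<n. lam (snd \<omega> v) * ((\<Sum>v'<n. W v v' * snd \<omega> v') - 1))
      = (\<Sum>i<n. \<Sum>\<theta>\<in>\<Sigma>. lam \<theta> * (indicator (signal_event i \<theta>) \<omega> * Z i \<omega>))"
    using AE_good[OF sch]
  proof eventually_elim
    case (elim \<omega>)
    have tp: "fst \<omega> \<in> type_profiles n" using elim unfolding good_def by simp
    have "(\<Sum>v<n. lam (snd \<omega> v) * ((\<Sum>v'<n. W v v' * snd \<omega> v') - 1))
        = (\<Sum>i<n. lam (snd \<omega> (fst \<omega> i)) * ((\<Sum>v'<n. W (fst \<omega> i) v' * snd \<omega> v') - 1))"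
      by (rule tp_sum_reindex[OF tp, symmetric])
    also have "\<dots> = (\<Sum>i<n. \<Sum>\<theta>\<in>\<Sigma>. lam \<theta> * (indicator (signal_event i \<theta>) \<omega> * Z i \<omega>))"
    proof (intro sum.cong refl)
      fix i assume "i \<in> {..<n}"
      hence i: "i < n" by simp
      have ti: "fst \<omega> i < n" using tp i tp_range by blast
      have inS: "snd \<omega> (fst \<omega> i) \<in> \<Sigma>" using elim ti unfolding good_def by blast
      have "(\<Sum>\<theta>\<in>\<Sigma>. lam \<theta> * (indicator (signal_event i \<theta>) \<omega> * Z i \<omega>))
          = (\<Sum>\<theta>\<in>\<Sigma>. if \<theta> = snd \<omega> (fst \<omega> i) then lam \<theta> * Z i \<omega> else 0)"
        by (intro sum.cong refl) (auto simp: indicator_def signal_event_def case_prod_unfold)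
      also have "\<dots> = lam (snd \<omega> (fst \<omega> i)) * Z i \<omega>"
        using finS inS by (simp add: sum.delta')
      finally show "lam (snd \<omega> (fst \<omega> i)) * ((\<Sum>v'<n. W (fst \<omega> i) v' * snd \<omega> v') - 1)
          = (\<Sum>\<theta>\<in>\<Sigma>. lam \<theta> * (indicator (signal_event i \<theta>) \<omega> * Z i \<omega>))"
        unfolding Z_def using good_W_sum[OF W elim i] by simp
    qed
    finally show ?case .
  qed
  have intZ: "integrable ?J (\<lambda>\<omega>. indicator (signal_event i \<theta>) \<omega> * Z i \<omega>)" if i: "i < n" for i \<theta>
  proof (rule integrable_AE_bound[where B = "real n + 2"])
    show "AE \<omega> in ?J. \<bar>indicator (signal_event i \<theta>) \<omega> * Z i \<omega>\<bar> \<le> real n + 2"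
      using AE_good[OF sch]
    proof eventually_elim
      case (elim \<omega>)
      have ti: "fst \<omega> i < n" using elim i tp_range unfolding good_def by blast
      have "\<bar>Z i \<omega>\<bar> \<le> 1 + real n + 1"
        unfolding Z_def using Yi_bound[OF W sch i elim] good_01[OF sch elim ti] by linarith
      hence "\<bar>indicator (signal_event i \<theta>) \<omega> * Z i \<omega>\<bar> \<le> 1 * (1 + real n + 1)"
        unfolding abs_mult by (intro mult_mono) (auto simp: indicator_def)
      thus ?case by simp
    qed
  qed
  have "measure_pmf.expectation (joint n \<phi>)
           (\<lambda>\<omega>. \<Sum>v<n. lam (snd \<omega> v) * ((\<Sum>v'<n. W v v' * snd \<omega> v') - 1))
      = measure_pmf.expectation (joint n \<phi>) (\<lambda>\<omega>. \<Sum>i<n. \<Sum>\<theta>\<in>\<Sigma>. lam \<theta> * (indicator (signal_event i \<theta>) \<omega> * Z i \<omega>))"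
    by (rule integral_cong_AE) (use AEeq in auto)
  also have "\<dots> = (\<Sum>i<n. \<Sum>\<theta>\<in>\<Sigma>. lam \<theta> * measure_pmf.expectation (joint n \<phi>) (\<lambda>\<omega>. indicator (signal_event i \<theta>) \<omega> * Z i \<omega>))"
    using intZ by (simp add: Bochner_Integration.integral_sum)
  also have "\<dots> \<ge> 0"
  proof (intro sum_nonneg)
    fix i \<theta> assume "i \<in> {..<n}" "\<theta> \<in> \<Sigma>"
    hence i: "i < n" by simp
    have eq: "measure_pmf.expectation (joint n \<phi>) (\<lambda>\<omega>. indicator (signal_event i \<theta>) \<omega> * Z i \<omega>)
         = (if \<theta> = 0 then max 0 (measure_pmf.expectation (joint n \<phi>) (\<lambda>\<omega>. indicator (signal_event i \<theta>) \<omega> * Z i \<omega>)) else 0)"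
      unfolding Z_def by (rule agent_theta[OF W sch pers i])
    show "0 \<le> lam \<theta> * measure_pmf.expectation (joint n \<phi>) (\<lambda>\<omega>. indicator (signal_event i \<theta>) \<omega> * Z i \<omega>)"
    proof (cases "\<theta> = 0")
      case True
      hence "measure_pmf.expectation (joint n \<phi>) (\<lambda>\<omega>. indicator (signal_event i \<theta>) \<omega> * Z i \<omega>) \<ge> 0"
        using eq by (metis max.cobounded1)
      thus ?thesis using True lam0 by simp
    next
      case False
      thus ?thesis using eq by simp
    qed
  qed
  finally show ?thesis .
qed

lemma cost_lower:
  fixes lam :: "real \<Rightarrow> real"
  assumes W: "unit_weight_graph n W" and sch: "is_scheme n \<Sigma> \<phi>" and pers: "persuasive n W \<phi>"
    and lam0: "lam 0 \<ge> 0"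
    and bound: "\<And>s. (\<forall>v<n. 0 \<le> s v \<and> s v \<le> 1) \<Longrightarrow>
        (\<Sum>v<n. s v - lam (s v) * ((\<Sum>v'<n. W v v' * s v') - 1)) \<ge> K"
  shows "cost n \<phi> \<ge> K"
proof -
  let ?J = "measure_pmf (joint n \<phi>)"
  define L where "L (\<omega> :: (nat \<Rightarrow> nat) \<times> (nat \<Rightarrow> real)) = (\<Sum>v<n. lam (snd \<omega> v) * ((\<Sum>v'<n. W v v' * snd \<omega> v') - 1))" for \<omega>
  have intL: "integrable ?J L"
    unfolding L_def by (rule integrable_AE_bound, rule AE_mp[OF AE_good[OF sch]])
      (auto intro!: lamZ_bound[OF W sch])
  have intC: "integrable ?J (\<lambda>\<omega>. \<Sum>v<n. \<bar>snd \<omega> v\<bar>)"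
  proof (rule integrable_AE_bound[where B = n])
    show "AE \<omega> in ?J. \<bar>\<Sum>v<n. \<bar>snd \<omega> v\<bar>\<bar> \<le> n"
      using AE_good[OF sch]
    proof eventually_elim
      case (elim \<omega>)
      have "(\<Sum>v<n. \<bar>snd \<omega> v\<bar>) \<le> (\<Sum>v<n. 1)"
        using good_01[OF sch elim] by (intro sum_mono) auto
      thus ?case by (simp add: sum_nonneg)
    qed
  qed
  have "measure_pmf.expectation (joint n \<phi>) (\<lambda>\<omega>. K + L \<omega>) \<le> measure_pmf.expectation (joint n \<phi>) (\<lambda>\<omega>. \<Sum>v<n. \<bar>snd \<omega> v\<bar>)"
  proof (rule integral_mono_AE)
    show "integrable ?J (\<lambda>\<omega>. K + L \<omega>)" using intL by simp
    show "integrable ?J (\<lambda>\<omega>. \<Sum>v<n. \<bar>snd \<omega> v\<bar>)" by (rule intC)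
    show "AE \<omega> in ?J. K + L \<omega> \<le> (\<Sum>v<n. \<bar>snd \<omega> v\<bar>)"
      using AE_good[OF sch]
    proof eventually_elim
      case (elim \<omega>)
      have 01: "\<forall>v<n. 0 \<le> snd \<omega> v \<and> snd \<omega> v \<le> 1" using good_01[OF sch elim] by blast
      have "K \<le> (\<Sum>v<n. snd \<omega> v - lam (snd \<omega> v) * ((\<Sum>v'<n. W v v' * snd \<omega> v') - 1))"
        by (rule bound[OF 01])
      also have "\<dots> = (\<Sum>v<n. snd \<omega> v) - L \<omega>" unfolding L_def by (simp add: sum_subtractf)
      also have "(\<Sum>v<n. snd \<omega> v) = (\<Sum>v<n. \<bar>snd \<omega> v\<bar>)" using 01 by (intro sum.cong) auto
      finally show ?case by simp
    qed
  qed
  moreover have "measure_pmf.expectation (joint n \<phi>) (\<lambda>\<omega>. K + L \<omega>) = K + measure_pmf.expectation (joint n \<phi>) L"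
    using intL by simp
  moreover have "measure_pmf.expectation (joint n \<phi>) L \<ge> 0"
    unfolding L_def by (rule dual_sum[where lam = lam, OF W sch pers lam0])
  moreover have "cost n \<phi> = measure_pmf.expectation (joint n \<phi>) (\<lambda>\<omega>. \<Sum>v<n. \<bar>snd \<omega> v\<bar>)"
    unfolding cost_def by (simp add: case_prod_unfold)
  ultimately show ?thesis by simp
qed



definition hubW :: "nat \<Rightarrow> nat \<Rightarrow> real" where
  "hubW u v = (if u = v then 1 else if u < 2 \<and> v < 2 then 1
     else if 2 \<le> u \<and> v = u mod 2 then 1 else if 2 \<le> v \<and> u = v mod 2 then 1 else 0)"

definition lamH :: "real \<Rightarrow> real \<Rightarrow> real" where
  "lamH M \<theta> = (if \<theta> < 1/2 then 1/8 else if \<theta> < 1 then - (\<theta> / (2 * (1 - \<theta>))) else - M)"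

definition Lf :: "nat \<Rightarrow> nat \<Rightarrow> nat set" where
  "Lf n c = {l. 2 \<le> l \<and> l < n \<and> l mod 2 = c}"

lemma hubW_alt: "hubW u v = (if u = v \<or> (u < 2 \<and> v < 2) \<or> (2 \<le> u \<and> v = u mod 2) \<or> (2 \<le> v \<and> u = v mod 2) then 1 else 0)"
  unfolding hubW_def by simp

lemma hubW_sym: "hubW u v = hubW v u"
proof -
  have "(u = v \<or> (u < 2 \<and> v < 2) \<or> (2 \<le> u \<and> v = u mod 2) \<or> (2 \<le> v \<and> u = v mod 2))
      = (v = u \<or> (v < 2 \<and> u < 2) \<or> (2 \<le> v \<and> u = v mod 2) \<or> (2 \<le> u \<and> v = u mod 2))" by blast
  thus ?thesis unfolding hubW_alt by simp
qed

lemma hub_uw: "unit_weight_graph n hubW"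
  unfolding unit_weight_graph_def
proof (intro conjI allI impI)
  fix u v :: nat
  show "hubW u v \<in> {0, 1}" unfolding hubW_alt by simp
  show "hubW u v = hubW v u" by (rule hubW_sym)
  show "hubW v v = 1" unfolding hubW_def by simp
qed

lemma hub_OPT: assumes "2 \<le> n" shows "OPT n hubW \<le> 2"
proof -
  define \<theta> where "\<theta> = (\<lambda>v::nat. if v < 2 then (1::real) else 0)"
  have "feasible n hubW \<theta>"
    unfolding feasible_def
  proof (intro conjI allI impI)
    fix v assume v: "v < n"
    define w where "w = (if v < 2 then v else v mod 2)"
    have w: "w < n" "hubW v w = 1" "\<theta> w = 1" using v assms unfolding w_def hubW_def \<theta>_def by auto
    have "hubW v w * \<theta> w \<le> (\<Sum>v'<n. hubW v v' * \<theta> v')"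
      using w by (intro member_le_sum) (auto simp: hubW_def \<theta>_def)
    thus "1 \<le> (\<Sum>v'<n. hubW v v' * \<theta> v')" using w by simp
  qed (auto simp: \<theta>_def)
  hence "OPT n hubW \<le> (\<Sum>v<n. \<theta> v)" by (rule OPT_le)
  also have "(\<Sum>v<n. \<theta> v) = (\<Sum>v\<in>{0,1}. \<theta> v)"
    using assms by (intro sum.mono_neutral_right) (auto simp: \<theta>_def)
  also have "\<dots> = 2" by (simp add: \<theta>_def)
  finally show ?thesis .
qed

lemma Lf_card:
  assumes "n = 2 * m + 2" "c < 2"
  shows "card (Lf n c) = m"
proof -
  have "Lf n c = (\<lambda>k. 2 * k + c) ` {1..m}"
  proof
    show "Lf n c \<subseteq> (\<lambda>k. 2 * k + c) ` {1..m}"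
    proof
      fix l assume "l \<in> Lf n c"
      hence l: "2 \<le> l" "l < n" "l mod 2 = c" unfolding Lf_def by auto
      have "l = 2 * (l div 2) + c" using l(3) mult_div_mod_eq[of 2 l] by simp
      moreover have "l div 2 \<in> {1..m}" using l assms by auto
      ultimately show "l \<in> (\<lambda>k. 2 * k + c) ` {1..m}" by blast
    qed
    show "(\<lambda>k. 2 * k + c) ` {1..m} \<subseteq> Lf n c"
      using assms unfolding Lf_def by auto
  qed
  moreover have "inj_on (\<lambda>k. 2 * k + c) {1..m}" by (auto simp: inj_on_def)
  ultimately show ?thesis by (simp add: card_image)
qed

lemma Lf_sub: "Lf n c \<subseteq> {..<n}" unfolding Lf_def by auto

lemma split_V:
  assumes "2 \<le> n"
  shows "{..<n} = {0,1} \<union> Lf n 0 \<union> Lf n 1"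
proof
  show "{..<n} \<subseteq> {0,1} \<union> Lf n 0 \<union> Lf n 1"
  proof
    fix v assume "v \<in> {..<n}"
    thus "v \<in> {0,1} \<union> Lf n 0 \<union> Lf n 1" unfolding Lf_def by (cases "v mod 2 = 0") auto
  qed
  show "{0,1} \<union> Lf n 0 \<union> Lf n 1 \<subseteq> {..<n}" using assms unfolding Lf_def by auto
qed

lemma sum_split_V:
  fixes f :: "nat \<Rightarrow> real"
  assumes "2 \<le> n"
  shows "(\<Sum>v<n. f v) = f 0 + f 1 + (\<Sum>l\<in>Lf n 0. f l) + (\<Sum>l\<in>Lf n 1. f l)"
proof -
  have fin: "finite (Lf n c)" for c using Lf_sub finite_subset by blast
  have "(\<Sum>v<n. f v) = (\<Sum>v\<in>{0,1} \<union> Lf n 0 \<union> Lf n 1. f v)" using split_V[OF assms] by simp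
  also have "\<dots> = (\<Sum>v\<in>{0,1} \<union> Lf n 0. f v) + (\<Sum>l\<in>Lf n 1. f l)"
    using fin by (intro sum.union_disjoint) (auto simp: Lf_def)
  also have "(\<Sum>v\<in>{0,1} \<union> Lf n 0. f v) = (\<Sum>v\<in>{0,1}. f v) + (\<Sum>l\<in>Lf n 0. f l)"
    using fin by (intro sum.union_disjoint) (auto simp: Lf_def)
  finally show ?thesis by simp
qed

lemma leaf_nsum:
  assumes "2 \<le> l" "l < n"
  shows "(\<Sum>v'<n. hubW l v' * s v') = s l + s (l mod 2)"
proof -
  have "(\<Sum>v'<n. hubW l v' * s v') = (\<Sum>v'\<in>{l, l mod 2}. hubW l v' * s v')"
    using assms by (intro sum.mono_neutral_right) (auto simp: hubW_def)
  also have "\<dots> = s l + s (l mod 2)" using assms by (simp add: hubW_def)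
  finally show ?thesis .
qed

lemma center_nsum:
  assumes "2 \<le> n" "c < 2"
  shows "(\<Sum>v'<n. hubW c v' * s v') = s 0 + s 1 + (\<Sum>l\<in>Lf n c. s l)"
proof -
  have "(\<Sum>v'<n. hubW c v' * s v') = hubW c 0 * s 0 + hubW c 1 * s 1 + (\<Sum>l\<in>Lf n 0. hubW c l * s l)
          + (\<Sum>l\<in>Lf n 1. hubW c l * s l)"
    using sum_split_V[OF assms(1)] .
  also have "(\<Sum>l\<in>Lf n 0. hubW c l * s l) = (\<Sum>l\<in>Lf n 0. if c = 0 then s l else 0)"
    using assms by (intro sum.cong refl) (auto simp: hubW_def Lf_def)
  also have "(\<Sum>l\<in>Lf n 1. hubW c l * s l) = (\<Sum>l\<in>Lf n 1. if c = 1 then s l else 0)"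
    using assms by (intro sum.cong refl) (auto simp: hubW_def Lf_def)
  finally have eq: "(\<Sum>v'<n. hubW c v' * s v') = hubW c 0 * s 0 + hubW c 1 * s 1 +
      (\<Sum>l\<in>Lf n 0. if c = 0 then s l else 0) + (\<Sum>l\<in>Lf n 1. if c = 1 then s l else 0)" .
  show ?thesis
  proof (cases "c = 0")
    case True thus ?thesis using eq by (simp add: hubW_def)
  next
    case False
    hence "c = 1" using assms by simp
    thus ?thesis using eq by (simp add: hubW_def)
  qed
qed

lemma leaf_bound:
  fixes \<theta> x M :: real
  assumes "0 \<le> \<theta>" "\<theta> \<le> 1" "0 \<le> x" "x \<le> 1" "0 \<le> M"
  shows "\<theta> - lamH M \<theta> * (\<theta> + x - 1) \<ge> (1 - x) / 8 + \<theta> / 4"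
proof -
  consider "\<theta> < 1/2" | "1/2 \<le> \<theta>" "\<theta> < 1" | "\<theta> = 1" using assms by linarith
  thus ?thesis
  proof cases
    case 1
    hence e: "\<theta> - lamH M \<theta> * (\<theta> + x - 1) = \<theta> - (\<theta> + x - 1) / 8" by (simp add: lamH_def)
    have "\<theta> - (\<theta> + x - 1) / 8 \<ge> (1 - x) / 8 + \<theta> / 4" using assms by (simp add: field_simps)
    thus ?thesis by (simp only: e)
  next
    case 2
    have d: "1 - \<theta> > 0" using 2 by simp
    have "\<theta> - lamH M \<theta> * (\<theta> + x - 1) = \<theta> + \<theta> * (\<theta> + x - 1) / (2 * (1 - \<theta>))"
      using 2 by (simp add: lamH_def)
    also have "\<theta> * (\<theta> + x - 1) / (2 * (1 - \<theta>)) = \<theta> * x / (2 * (1 - \<theta>)) - \<theta> / 2"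
      using d by (simp add: field_simps)
    also have "\<theta> * x / (2 * (1 - \<theta>)) \<ge> 0" using d assms by simp
    hence "\<theta> + (\<theta> * x / (2 * (1 - \<theta>)) - \<theta> / 2) \<ge> \<theta> / 2" by simp
    moreover have "\<theta> / 2 \<ge> (1 - x) / 8 + \<theta> / 4" using 2 assms by (simp add: field_simps)
    ultimately show ?thesis by linarith
  next
    case 3
    hence e: "\<theta> - lamH M \<theta> * (\<theta> + x - 1) = 1 + M * x" by (simp add: lamH_def)
    have Mx: "M * x \<ge> 0" using assms by simp
    have "(1 - x) / 8 + \<theta> / 4 \<le> 3 / 8" using 3 assms by (simp add: field_simps)
    hence "(1 - x) / 8 + \<theta> / 4 \<le> 1 + M * x" using Mx by linarith
    thus ?thesis by (simp only: e)
  qed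
qed

lemma amgm_like:
  fixes m d :: real
  assumes "0 < d" "0 \<le> m"
  shows "m * d / 8 + 1 / (8 * d) \<ge> sqrt m / 4"
proof -
  have "0 \<le> (sqrt m * d - 1)^2" by simp
  hence "0 \<le> m * d * d - 2 * sqrt m * d + 1" using assms by (simp add: power2_eq_square algebra_simps)
  hence "2 * sqrt m * d \<le> m * d * d + 1" by simp
  hence "2 * sqrt m * d / (8 * d) \<le> (m * d * d + 1) / (8 * d)" using assms by (intro divide_right_mono) auto
  moreover have "2 * sqrt m * d / (8 * d) = sqrt m / 4" using assms by simp
  moreover have "(m * d * d + 1) / (8 * d) = m * d / 8 + 1 / (8 * d)" using assms by (simp add: field_simps)
  ultimately show ?thesis by simp
qed

lemma group_bound:
  fixes x y \<sigma> m G :: real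
  assumes x: "0 \<le> x" "x \<le> 1" and y: "0 \<le> y" "y \<le> 1" and \<sigma>: "0 \<le> \<sigma>" and m: "1 \<le> m"
    and G: "G \<ge> (x - lamH (sqrt m / 2) x * (x + y + \<sigma> - 1)) + m * (1 - x) / 8 + \<sigma> / 4"
  shows "G \<ge> 0" and "x < 1/2 \<Longrightarrow> G \<ge> m / 16" and "1/2 \<le> x \<Longrightarrow> 1/2 \<le> y \<Longrightarrow> G \<ge> sqrt m / 4"
proof -
  define T where "T = x - lamH (sqrt m / 2) x * (x + y + \<sigma> - 1)"
  have sm: "sqrt m \<ge> 1" using m by simp
  have main: "G \<ge> 0 \<and> (x < 1/2 \<longrightarrow> G \<ge> m / 16) \<and> (1/2 \<le> x \<longrightarrow> 1/2 \<le> y \<longrightarrow> G \<ge> sqrt m / 4)"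
  proof -
    consider "x < 1/2" | "1/2 \<le> x" "x < 1" | "x = 1" using x by linarith
    thus ?thesis
    proof cases
      case 1
      have "T = x - (x + y + \<sigma> - 1) / 8" unfolding T_def using 1 by (simp add: lamH_def)
      hence "T \<ge> - \<sigma> / 8" using x y by (simp add: field_simps)
      moreover have "m * (1 - x) / 8 \<ge> m / 16" using 1 m by simp
      ultimately have "G \<ge> m / 16" using G \<sigma> unfolding T_def by linarith
      thus ?thesis using 1 m by simp
    next
      case 2
      define d where "d = 1 - x"
      have d: "d > 0" "d \<le> 1/2" using 2 unfolding d_def by auto
      have "T = x + x * (x + y + \<sigma> - 1) / (2 * d)" unfolding T_def d_def using 2 by (simp add: lamH_def)
      also have "x * (x + y + \<sigma> - 1) / (2 * d) = x * (y + \<sigma>) / (2 * d) - x / 2"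
        using d unfolding d_def by (simp add: field_simps)
      finally have T: "T = x / 2 + x * (y + \<sigma>) / (2 * d)" by simp
      have T0: "T \<ge> 0" unfolding T using x \<sigma> y d by simp
      have "m * (1 - x) / 8 \<ge> 0" using m x by simp
      hence G0: "G \<ge> 0" using G T0 \<sigma> unfolding T_def by linarith
      have "1/2 \<le> y \<longrightarrow> G \<ge> sqrt m / 4"
      proof
        assume y2: "1/2 \<le> y"
        have "x * (y + \<sigma>) \<ge> 1/2 * (1/2)" using 2 y2 \<sigma> by (intro mult_mono) auto
        hence "x * (y + \<sigma>) / (2 * d) \<ge> (1/4) / (2 * d)" using d by (intro divide_right_mono) auto
        hence "T \<ge> 1 / (8 * d)" unfolding T using x by simp
        moreover have "m * d / 8 + 1 / (8 * d) \<ge> sqrt m / 4" using amgm_like d m by simp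
        ultimately show "G \<ge> sqrt m / 4" using G \<sigma> unfolding T_def d_def by linarith
      qed
      thus ?thesis using G0 2 by simp
    next
      case 3
      have "T = 1 + sqrt m / 2 * (y + \<sigma>)" unfolding T_def using 3 by (simp add: lamH_def algebra_simps)
      moreover have "sqrt m / 2 * (y + \<sigma>) \<ge> 0" using y \<sigma> sm by simp
      ultimately have T0: "T \<ge> 0" by simp
      have G1: "G \<ge> T" using G \<sigma> 3 unfolding T_def by simp
      have "1/2 \<le> y \<longrightarrow> G \<ge> sqrt m / 4"
      proof
        assume y2: "1/2 \<le> y"
        have "sqrt m / 2 * (y + \<sigma>) \<ge> sqrt m / 2 * (1/2)" using y2 \<sigma> sm by (intro mult_left_mono) auto
        thus "G \<ge> sqrt m / 4" using G1 \<open>T = 1 + sqrt m / 2 * (y + \<sigma>)\<close> by simp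
      qed
      thus ?thesis using G1 T0 3 by simp
    qed
  qed
  show "G \<ge> 0" using main by blast
  show "x < 1/2 \<Longrightarrow> G \<ge> m / 16" using main by blast
  show "1/2 \<le> x \<Longrightarrow> 1/2 \<le> y \<Longrightarrow> G \<ge> sqrt m / 4" using main by blast
qed



lemma hub_group:
  fixes s :: "nat \<Rightarrow> real" and m :: nat
  assumes n: "n = 2 * m + 2" and s01: "\<forall>v<n. 0 \<le> s v \<and> s v \<le> 1" and c: "c < 2"
  defines "T \<equiv> \<lambda>v. s v - lamH (sqrt m / 2) (s v) * ((\<Sum>v'<n. hubW v v' * s v') - 1)"
  shows "T c + (\<Sum>l\<in>Lf n c. T l) \<ge>
           (s c - lamH (sqrt m / 2) (s c) * (s c + s (1 - c) + (\<Sum>l\<in>Lf n c. s l) - 1))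
           + m * (1 - s c) / 8 + (\<Sum>l\<in>Lf n c. s l) / 4"
proof -
  have n2: "2 \<le> n" using n by simp
  have cn: "c < n" using c n2 by simp
  have sc: "0 \<le> s c" "s c \<le> 1" using s01 cn by auto
  have Tc: "T c = s c - lamH (sqrt m / 2) (s c) * (s c + s (1 - c) + (\<Sum>l\<in>Lf n c. s l) - 1)"
  proof -
    have "s 0 + s 1 = s c + s (1 - c)"
    proof (cases "c = 0")
      case False
      hence "c = 1" using c by simp
      thus ?thesis by simp
    qed simp
    thus ?thesis unfolding T_def using center_nsum[OF n2 c, of s] by simp
  qed
  have "(\<Sum>l\<in>Lf n c. T l) \<ge> (\<Sum>l\<in>Lf n c. (1 - s c) / 8 + s l / 4)"
  proof (intro sum_mono)
    fix l assume "l \<in> Lf n c"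
    hence l: "2 \<le> l" "l < n" "l mod 2 = c" unfolding Lf_def by auto
    have "T l = s l - lamH (sqrt m / 2) (s l) * (s l + s c - 1)"
      unfolding T_def using leaf_nsum[OF l(1,2), of s] l(3) by simp
    also have "\<dots> \<ge> (1 - s c) / 8 + s l / 4"
      using s01 l sc by (intro leaf_bound) auto
    finally show "(1 - s c) / 8 + s l / 4 \<le> T l" .
  qed
  also have "(\<Sum>l\<in>Lf n c. (1 - s c) / 8 + s l / 4) = m * (1 - s c) / 8 + (\<Sum>l\<in>Lf n c. s l) / 4"
    using Lf_card[OF n c] by (simp add: sum.distrib sum_divide_distrib)
  finally show ?thesis using Tc by simp
qed

lemma hub_pointwise:
  fixes s :: "nat \<Rightarrow> real" and m :: nat
  assumes n: "n = 2 * m + 2" and m: "1 \<le> m" and s01: "\<forall>v<n. 0 \<le> s v \<and> s v \<le> 1"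
  shows "(\<Sum>v<n. s v - lamH (sqrt m / 2) (s v) * ((\<Sum>v'<n. hubW v v' * s v') - 1)) \<ge> sqrt m / 16"
proof -
  define T where "T = (\<lambda>v. s v - lamH (sqrt m / 2) (s v) * ((\<Sum>v'<n. hubW v v' * s v') - 1))"
  have n2: "2 \<le> n" using n by simp
  define G where "G c = T c + (\<Sum>l\<in>Lf n c. T l)" for c
  have tot: "(\<Sum>v<n. T v) = G 0 + G 1" unfolding G_def using sum_split_V[OF n2, of T] by simp
  have m1: "(1::real) \<le> real m" using m by simp
  have gb: "G c \<ge> 0 \<and> (s c < 1/2 \<longrightarrow> G c \<ge> real m / 16) \<and> (1/2 \<le> s c \<longrightarrow> 1/2 \<le> s (1 - c) \<longrightarrow> G c \<ge> sqrt m / 4)"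
    if c: "c < 2" for c
  proof -
    have cn: "c < n" "1 - c < n" using c n2 by auto
    have sig0: "(\<Sum>l\<in>Lf n c. s l) \<ge> 0" using s01 Lf_sub[of n c] by (intro sum_nonneg) auto
    have H: "G c \<ge> (s c - lamH (sqrt (real m) / 2) (s c) * (s c + s (1 - c) + (\<Sum>l\<in>Lf n c. s l) - 1))
           + real m * (1 - s c) / 8 + (\<Sum>l\<in>Lf n c. s l) / 4"
      unfolding G_def T_def using hub_group[OF n s01 c] by simp
    show ?thesis
      using group_bound[OF _ _ _ _ sig0 m1 H] s01 cn by auto
  qed
  have sm: "sqrt (real m) \<le> real m"
  proof -
    have "sqrt (real m) * 1 \<le> sqrt (real m) * sqrt (real m)" using m1 by (intro mult_left_mono) auto
    thus ?thesis by simp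
  qed
  have g0: "G 0 \<ge> 0" and g1: "G 1 \<ge> 0" using gb[of 0] gb[of 1] by auto
  have "G 0 + G 1 \<ge> sqrt m / 16"
  proof (cases "s 0 < 1/2")
    case True
    hence "G 0 \<ge> real m / 16" using gb[of 0] by simp
    thus ?thesis using g1 sm by linarith
  next
    case F0: False
    show ?thesis
    proof (cases "s 1 < 1/2")
      case True
      hence "G 1 \<ge> real m / 16" using gb[of 1] by simp
      thus ?thesis using g0 sm by linarith
    next
      case False
      hence "G 0 \<ge> sqrt m / 4" using gb[of 0] F0 by simp
      moreover have "sqrt (real m) \<ge> 0" by simp
      ultimately show ?thesis using g1 by linarith
    qed
  qed
  thus ?thesis using tot unfolding T_def by simp
qed

lemma part2:
  "\<exists>c>0. \<exists>K. \<forall>N. \<exists>n\<ge>N. \<exists>W. unit_weight_graph n W \<and> OPT n W \<le> K \<and>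
            (\<forall>\<Sigma> \<phi>. is_scheme n \<Sigma> \<phi> \<and> persuasive n W \<phi> \<longrightarrow> cost n \<phi> \<ge> c * sqrt (real n))"
proof -
  have main: "\<forall>N. \<exists>n\<ge>N. \<exists>W. unit_weight_graph n W \<and> OPT n W \<le> 2 \<and>
            (\<forall>\<Sigma> \<phi>. is_scheme n \<Sigma> \<phi> \<and> persuasive n W \<phi> \<longrightarrow> cost n \<phi> \<ge> 1/32 * sqrt (real n))"
  proof
  fix N :: nat
  define m where "m = N + 1"
  define n where "n = 2 * m + 2"
  have m1: "1 \<le> m" unfolding m_def by simp
  have nN: "n \<ge> N" unfolding n_def m_def by simp
  have n2: "2 \<le> n" unfolding n_def by simp
  have low: "cost n \<phi> \<ge> 1/32 * sqrt (real n)" if "is_scheme n \<Sigma> \<phi>" "persuasive n hubW \<phi>" for \<Sigma> \<phi>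
  proof -
    have "cost n \<phi> \<ge> sqrt m / 16"
    proof (rule cost_lower[OF hub_uw that, where lam = "lamH (sqrt m / 2)"])
      show "0 \<le> lamH (sqrt (real m) / 2) 0" by (simp add: lamH_def)
      fix s :: "nat \<Rightarrow> real" assume "\<forall>v<n. 0 \<le> s v \<and> s v \<le> 1"
      thus "sqrt m / 16 \<le> (\<Sum>v<n. s v - lamH (sqrt m / 2) (s v) * ((\<Sum>v'<n. hubW v v' * s v') - 1))"
        by (intro hub_pointwise[OF n_def m1])
    qed
    moreover have "sqrt (real n) \<le> 2 * sqrt m"
    proof -
      have "sqrt (real n) \<le> sqrt (4 * real m)" unfolding n_def using m1 by simp
      also have "sqrt (4 * real m) = 2 * sqrt m" by (simp add: real_sqrt_mult)
      finally show ?thesis .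
    qed
    ultimately show ?thesis by simp
  qed
  show "\<exists>n\<ge>N. \<exists>W. unit_weight_graph n W \<and> OPT n W \<le> 2 \<and>
            (\<forall>\<Sigma> \<phi>. is_scheme n \<Sigma> \<phi> \<and> persuasive n W \<phi> \<longrightarrow> cost n \<phi> \<ge> 1/32 * sqrt (real n))"
    using nN hub_uw hub_OPT[OF n2] low by blast
  qed
  show ?thesis using main by (intro exI[of _ "1/32"] conjI exI[of _ 2]) auto
qed

theorem theorem1p1:
  shows "(\<exists>C>0. \<forall>n W. unit_weight_graph n W \<longrightarrow>
            (\<exists>\<Sigma> \<phi>. is_scheme n \<Sigma> \<phi> \<and> card \<Sigma> = 2 \<and> persuasive n W \<phi> \<and>
                     cost n \<phi> \<le> C * sqrt (real n) * OPT n W))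
       \<and> (\<exists>c>0. \<exists>K. \<forall>N. \<exists>n\<ge>N. \<exists>W. unit_weight_graph n W \<and> OPT n W \<le> K \<and>
            (\<forall>\<Sigma> \<phi>. is_scheme n \<Sigma> \<phi> \<and> persuasive n W \<phi> \<longrightarrow> cost n \<phi> \<ge> c * sqrt (real n)))"
proof
  show "\<exists>C>0. \<forall>n W. unit_weight_graph n W \<longrightarrow>
            (\<exists>\<Sigma> \<phi>. is_scheme n \<Sigma> \<phi> \<and> card \<Sigma> = 2 \<and> persuasive n W \<phi> \<and>
                     cost n \<phi> \<le> C * sqrt (real n) * OPT n W)"
    using part1 by (intro exI[of _ 5]) auto
  show "\<exists>c>0. \<exists>K. \<forall>N. \<exists>n\<ge>N. \<exists>W. unit_weight_graph n W \<and> OPT n W \<le> K \<and>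
            (\<forall>\<Sigma> \<phi>. is_scheme n \<Sigma> \<phi> \<and> persuasive n W \<phi> \<longrightarrow> cost n \<phi> \<ge> c * sqrt (real n))"
    by (rule part2)
qed

end
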